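(* Let $A$ be any $K$-algebra and suppose there are two short exact sequences of finite-dimensional $A$-modules $0\to x_2\to x\to x_1\to 0$ and $0\to x_1\to x\to x_3\to0$. Assume that $\operatorname{Ext}^1_A(x_1,x_1)=0$, $\dim\operatorname{Hom}_A(x_1,x_2)=\dim\operatorname{Hom}_A(x_1,x_3)$ and $\dim\operatorname{Hom}_A(x_2,x_1)=\dim\operatorname{Hom}_A(x_3,x_1)$. Then both short exact sequences split (and hence $x_3\simeq x_2$).
   Context: $K$ is a field (algebraically closed in the paper's setting). *)

theory Defs
  imports Complex_Main "HOL-Library.Function_Algebras" "HOL-Library.Product_Plus"
begin

definition k_algebra :: "('k::field \<Rightarrow> 'a::ring_1 \<Rightarrow> 'a) \<Rightarrow> bool" where
  "k_algebra sA \<longleftrightarrow> Vector_Spaces.vector_space sA \<and>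
     (\<forall>c a b. sA c (a * b) = sA c a * b \<and> sA c (a * b) = a * sA c b)"

definition a_module ::
  "('k::field \<Rightarrow> 'a::ring_1 \<Rightarrow> 'a) \<Rightarrow> ('k \<Rightarrow> 'v::ab_group_add \<Rightarrow> 'v) \<Rightarrow> ('a \<Rightarrow> 'v \<Rightarrow> 'v) \<Rightarrow> bool" where
  "a_module sA sV act \<longleftrightarrow> Vector_Spaces.vector_space sV \<and>
     (\<forall>a u v. act a (u + v) = act a u + act a v) \<and>
     (\<forall>a b v. act (a + b) v = act a v + act b v) \<and>
     (\<forall>v. act 1 v = v) \<and>
     (\<forall>a b v. act (a * b) v = act a (act b v)) \<and>
     (\<forall>c a v. act (sA c a) v = sV c (act a v) \<and> act a (sV c v) = sV c (act a v))"

definition fin_dim :: "('k::field \<Rightarrow> 'v::ab_group_add \<Rightarrow> 'v) \<Rightarrow> bool" where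
  "fin_dim sV \<longleftrightarrow> (\<exists>B. finite B \<and> Modules.module.span sV B = UNIV)"

definition mod_hom ::
  "('k::field \<Rightarrow> 'v::ab_group_add \<Rightarrow> 'v) \<Rightarrow> ('a \<Rightarrow> 'v \<Rightarrow> 'v) \<Rightarrow>
   ('k \<Rightarrow> 'w::ab_group_add \<Rightarrow> 'w) \<Rightarrow> ('a \<Rightarrow> 'w \<Rightarrow> 'w) \<Rightarrow> ('v \<Rightarrow> 'w) \<Rightarrow> bool" where
  "mod_hom sV actV sW actW f \<longleftrightarrow> Vector_Spaces.linear sV sW f \<and> (\<forall>a v. f (actV a v) = actW a (f v))"

definition hom_set where
  "hom_set sV actV sW actW = {f. mod_hom sV actV sW actW f}"

definition dim_hom ::
  "('k::field \<Rightarrow> 'v::ab_group_add \<Rightarrow> 'v) \<Rightarrow> ('a \<Rightarrow> 'v \<Rightarrow> 'v) \<Rightarrow>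
   ('k \<Rightarrow> 'w::ab_group_add \<Rightarrow> 'w) \<Rightarrow> ('a \<Rightarrow> 'w \<Rightarrow> 'w) \<Rightarrow> nat" where
  "dim_hom sV actV sW actW = Vector_Spaces.vector_space.dim (\<lambda>c f v. sW c (f v)) (hom_set sV actV sW actW)"

definition ses where
  "ses sM actM sN actN sP actP f g \<longleftrightarrow>
     mod_hom sM actM sN actN f \<and> mod_hom sN actN sP actP g \<and>
     inj f \<and> surj g \<and> range f = {n. g n = 0}"

definition ses_splits where
  "ses_splits sM actM sN actN sP actP f g \<longleftrightarrow>
     (\<exists>s. mod_hom sP actP sN actN s \<and> (\<forall>p. g (s p) = p))"

text \<open>Ext^1_A(M,M) = 0, in the Yoneda sense: every extension 0 \<rightarrow> M \<rightarrow> E \<rightarrow> M \<rightarrow> 0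
  splits. Every such E is K-linearly isomorphic to M \<times> M, so it suffices (and is
  equivalent) to let E range over all A-module structures on the type 'v \<times> 'v.\<close>
definition ext1_self_zero ::
  "('k::field \<Rightarrow> 'a::ring_1 \<Rightarrow> 'a) \<Rightarrow> ('k \<Rightarrow> 'v::ab_group_add \<Rightarrow> 'v) \<Rightarrow> ('a \<Rightarrow> 'v \<Rightarrow> 'v) \<Rightarrow> bool" where
  "ext1_self_zero sA sM actM \<longleftrightarrow>
     (\<forall>(sE :: 'k \<Rightarrow> 'v \<times> 'v \<Rightarrow> 'v \<times> 'v) actE f g.
        a_module sA sE actE \<longrightarrow> ses sM actM sE actE sM actM f g \<longrightarrow>
        ses_splits sM actM sE actE sM actM f g)"

definition mod_iso where
  "mod_iso sV actV sW actW \<longleftrightarrow> (\<exists>h. mod_hom sV actV sW actW h \<and> bij h)"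

end

theory Submission
  imports Defs
begin

context vector_space begin

lemma fd_indep_card_le:
  assumes "finite F" "S \<subseteq> span F" "independent B" "B \<subseteq> S"
  shows "finite B \<and> card B \<le> dim S"
proof -
  obtain BS where BS: "BS \<subseteq> S" "independent BS" "S \<subseteq> span BS" "card BS = dim S"
    by (rule basis_exists)
  have "finite BS" using independent_span_bound[OF assms(1) BS(2)] BS(1) assms(2) by auto
  have "B \<subseteq> span BS" using BS(3) assms(4) by auto
  then show ?thesis using independent_span_bound[OF \<open>finite BS\<close> assms(3)] BS by auto
qed

lemma fd_subspace_eq:
  assumes "finite F" "S \<subseteq> span F" "subspace S" "subspace T" "T \<subseteq> S" "dim S \<le> dim T"
  shows "T = S"
proof (rule ccontr)
  assume "T \<noteq> S"
  then obtain x where x: "x \<in> S" "x \<notin> T" using assms(5) by auto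
  obtain BT where BT: "BT \<subseteq> T" "independent BT" "T \<subseteq> span BT" "card BT = dim T"
    by (rule basis_exists)
  have sBT: "span BT = T" using span_subspace[OF BT(1) BT(3) assms(4)] .
  have ind: "independent (insert x BT)" using independent_insertI[of x BT] x sBT BT by auto
  have "finite (insert x BT) \<and> card (insert x BT) \<le> dim S"
    using fd_indep_card_le[OF assms(1,2) ind] x BT assms(5) by auto
  moreover have "x \<notin> BT" using x BT by auto
  ultimately show False using BT assms(6) by auto
qed

lemma dim_zero_space: "dim {0} = 0"
  using dim_span[of "{}"] dim_eq_card_independent[of "{}"] independent_empty by simp


lemma fd_dim_mono:
  assumes "finite F" "T \<subseteq> span F" "S \<subseteq> T"
  shows "dim S \<le> dim T"
proof -
  obtain BS where BS: "BS \<subseteq> S" "independent BS" "S \<subseteq> span BS" "card BS = dim S"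
    by (rule basis_exists)
  show ?thesis using fd_indep_card_le[OF assms(1,2) BS(2)] BS(1,4) assms(3) by auto
qed

lemma fd_dim_less:
  assumes "finite F" "T \<subseteq> span F" "subspace S" "subspace T" "S \<subset> T"
  shows "dim S < dim T"
  using fd_dim_mono[OF assms(1,2)] fd_subspace_eq[OF assms(1,2,4,3)] assms(5) by fastforce

lemma ext_linear_on:
  assumes S: "subspace S"
    and add: "\<And>x y. x \<in> S \<Longrightarrow> y \<in> S \<Longrightarrow> \<phi> (x + y) = \<phi> x + \<phi> y"
    and sc: "\<And>c x. x \<in> S \<Longrightarrow> \<phi> (scale c x) = scale c (\<phi> x)"
  shows "\<exists>g. Vector_Spaces.linear scale scale g \<and> (\<forall>x\<in>S. g x = \<phi> x)"
proof -
  interpret P: vector_space_pair scale scale by unfold_locales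
  obtain B where B: "B \<subseteq> S" "independent B" "S \<subseteq> span B" "card B = dim S"
    by (rule basis_exists)
  obtain g where g: "Vector_Spaces.linear scale scale g" "\<forall>x\<in>B. g x = \<phi> x"
    using P.linear_independent_extend[OF B(2)] by blast
  interpret gl: Vector_Spaces.linear scale scale g by (rule g(1))
  define Q where "Q = {x \<in> S. g x = \<phi> x}"
  have p0: "\<phi> 0 = 0" using add[of 0 0] subspace_0[OF S] by simp
  have sQ: "subspace Q" unfolding Q_def
  proof (rule subspaceI)
    show "0 \<in> {x \<in> S. g x = \<phi> x}" using subspace_0[OF S] p0 by simp
    show "x + y \<in> {x \<in> S. g x = \<phi> x}" if "x \<in> {x \<in> S. g x = \<phi> x}" "y \<in> {x \<in> S. g x = \<phi> x}" for x y
      using that subspace_add[OF S] add by (simp add: gl.add)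
    show "scale c x \<in> {x \<in> S. g x = \<phi> x}" if "x \<in> {x \<in> S. g x = \<phi> x}" for c x
      using that subspace_scale[OF S] sc by (simp add: gl.scale)
  qed
  have "span B \<subseteq> Q" by (rule span_minimal) (use B g sQ in \<open>auto simp: Q_def\<close>)
  then show ?thesis using B(3) g(1) unfolding Q_def by blast
qed
end

context vector_space_pair begin

lemma rank_nullity:
  assumes L: "Vector_Spaces.linear s1 s2 L" and F: "finite F" "S \<subseteq> vs1.span F" and S: "vs1.subspace S"
  shows "vs1.dim S = vs1.dim (S \<inter> {x. L x = 0}) + vs2.dim (L ` S)"
proof -
  interpret lin: Vector_Spaces.linear s1 s2 L by fact
  define K where "K = S \<inter> {x. L x = 0}"
  have sK: "vs1.subspace K" unfolding K_def
    by (rule vs1.subspace_inter[OF S lin.subspace_kernel])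
  obtain BK where BK: "BK \<subseteq> K" "vs1.independent BK" "K \<subseteq> vs1.span BK" "card BK = vs1.dim K"
    by (rule vs1.basis_exists)
  have sLS: "vs2.subspace (L ` S)" by (rule lin.subspace_image[OF S])
  obtain C where C: "C \<subseteq> L ` S" "vs2.independent C" "L ` S \<subseteq> vs2.span C" "card C = vs2.dim (L ` S)"
    by (rule vs2.basis_exists)
  have finBK: "finite BK" using vs1.fd_indep_card_le[OF F BK(2)] BK(1) K_def by auto
  have LSsp: "L ` S \<subseteq> vs2.span (L ` F)" using lin.spans_image[OF F(2)] .
  have finC: "finite C" using vs2.fd_indep_card_le[OF finite_imageI[OF F(1)] LSsp C(2) C(1)] by (rule conjunct1)
  have "\<forall>c\<in>C. \<exists>x. x \<in> S \<and> L x = c" using C(1) by blast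
  then obtain pre where pre: "\<And>c. c \<in> C \<Longrightarrow> pre c \<in> S \<and> L (pre c) = c"
    by metis
  define P where "P = pre ` C"
  have injpre: "inj_on pre C" by (rule inj_onI) (metis pre)
  have cardP: "card P = card C" unfolding P_def using card_image[OF injpre] .
  have LP: "L ` P = C" unfolding P_def image_image using pre by simp
  have PS: "P \<subseteq> S" unfolding P_def using pre by auto
  have injL: "inj_on L P" unfolding P_def by (rule inj_onI) (metis imageE pre)
  have finP: "finite P" unfolding P_def using finC by simp
  have z: "0 \<notin> C" using C(2) vs2.dependent_zero by auto
  have disj: "BK \<inter> P = {}"
  proof -
    { fix p assume "p \<in> BK" "p \<in> P"
      then have "L p = 0" "L p \<in> C" using BK(1) K_def LP by auto
      then have False using z by auto }
    then show ?thesis by auto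
  qed
  have span: "S \<subseteq> vs1.span (BK \<union> P)"
  proof
    fix x assume x: "x \<in> S"
    have "L x \<in> vs2.span C" using C(3) x by auto
    also have "vs2.span C = L ` vs1.span P" using lin.span_image[of P] LP by simp
    finally obtain y where y: "y \<in> vs1.span P" "L y = L x" by auto
    have "y \<in> S" using vs1.span_minimal[OF PS S] y by auto
    then have "x - y \<in> K" unfolding K_def using x y vs1.subspace_diff[OF S] by (auto simp: lin.diff)
    then have "x - y \<in> vs1.span (BK \<union> P)" using BK(3) vs1.span_mono[of BK "BK \<union> P"] by auto
    moreover have "y \<in> vs1.span (BK \<union> P)" using y vs1.span_mono[of P "BK \<union> P"] by auto
    ultimately have "(x - y) + y \<in> vs1.span (BK \<union> P)" by (rule vs1.span_add)
    then show "x \<in> vs1.span (BK \<union> P)" by simp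
  qed
  have indep: "vs1.independent (BK \<union> P)"
    unfolding vs1.independent_explicit_module
  proof (intro allI impI)
    fix t u v assume t: "finite t" "t \<subseteq> BK \<union> P" and sum0: "(\<Sum>v\<in>t. s1 (u v) v) = 0" and v: "v \<in> t"
    define tK where "tK = t \<inter> BK"
    define tP where "tP = t \<inter> P"
    have tU: "t = tK \<union> tP" "tK \<inter> tP = {}" using t disj unfolding tK_def tP_def by auto
    have fin: "finite tK" "finite tP" using t(1) unfolding tK_def tP_def by auto
    have sumsplit: "(\<Sum>v\<in>t. s1 (u v) v) = (\<Sum>v\<in>tK. s1 (u v) v) + (\<Sum>v\<in>tP. s1 (u v) v)"
      using sum.union_disjoint[OF fin tU(2)] tU(1) by simp
    have LK: "\<And>v. v \<in> tK \<Longrightarrow> L v = 0" using BK(1) unfolding tK_def K_def by auto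
    have "L (\<Sum>v\<in>t. s1 (u v) v) = (\<Sum>v\<in>tK. s2 (u v) (L v)) + (\<Sum>v\<in>tP. s2 (u v) (L v))"
      using sumsplit by (simp add: lin.add lin.sum lin.scale)
    also have "(\<Sum>v\<in>tK. s2 (u v) (L v)) = 0" using LK by simp
    finally have e1: "(\<Sum>v\<in>tP. s2 (u v) (L v)) = 0" using sum0 by simp
    define u' where "u' c = u (inv_into P L c)" for c
    have injtP: "inj_on L tP" using injL unfolding tP_def by (rule inj_on_subset) auto
    have "(\<Sum>c\<in>L ` tP. s2 (u' c) c) = (\<Sum>v\<in>tP. s2 (u' (L v)) (L v))"
      by (rule sum.reindex[OF injtP, unfolded comp_def])
    also have "\<dots> = (\<Sum>v\<in>tP. s2 (u v) (L v))"
      by (rule sum.cong) (auto simp: u'_def tP_def inv_into_f_f[OF injL])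
    finally have e2: "(\<Sum>c\<in>L ` tP. s2 (u' c) c) = 0" using e1 by simp
    have uP: "\<And>w. w \<in> tP \<Longrightarrow> u w = 0"
    proof -
      fix w assume w: "w \<in> tP"
      have "u' (L w) = 0"
        by (rule vs2.independentD[OF C(2) _ _ e2]) (use fin w LP tP_def in auto)
      then show "u w = 0" using w by (auto simp: u'_def tP_def inv_into_f_f[OF injL])
    qed
    have "(\<Sum>v\<in>tP. s1 (u v) v) = 0" using uP by simp
    then have e3: "(\<Sum>v\<in>tK. s1 (u v) v) = 0" using sum0 sumsplit by simp
    show "u v = 0"
    proof (cases "v \<in> tP")
      case True then show ?thesis using uP by auto
    next
      case False
      then have "v \<in> tK" using v tU by auto
      then show ?thesis using vs1.independentD[OF BK(2) fin(1) _ e3] tK_def by auto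
    qed
  qed
  have "BK \<union> P \<subseteq> S" using BK(1) PS K_def by auto
  then have "card (BK \<union> P) = vs1.dim S" using vs1.basis_card_eq_dim span indep by blast
  moreover have "card (BK \<union> P) = card BK + card P" using card_Un_disjoint[OF finBK finP disj] .
  ultimately show ?thesis using BK(4) cardP C(4) K_def by simp
qed

lemma dim_inj_image:
  assumes L: "Vector_Spaces.linear s1 s2 L" and F: "finite F" "S \<subseteq> vs1.span F" and S: "vs1.subspace S"
    and inj: "inj_on L S"
  shows "vs2.dim (L ` S) = vs1.dim S"
proof -
  interpret lin: Vector_Spaces.linear s1 s2 L by fact
  have "S \<inter> {x. L x = 0} = {0}"
  proof -
    have "0 \<in> S" using vs1.subspace_0[OF S] .
    then show ?thesis using inj unfolding inj_on_def by auto
  qed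
  then show ?thesis using rank_nullity[OF L F S] vs1.dim_zero_space by simp
qed

end

lemma sum_fun_apply: "(\<Sum>i\<in>I. f i) x = (\<Sum>i\<in>I. f i x)"
  by (induction I rule: infinite_finite_induct) auto

lemma vs_fun:
  assumes "vector_space s"
  shows "vector_space (\<lambda>c f v. s c (f v))"
proof -
  interpret vector_space s by fact
  show ?thesis
    by unfold_locales (auto simp: fun_eq_iff scale_right_distrib scale_left_distrib)
qed

lemma a_module_vs: "a_module sA sV act \<Longrightarrow> vector_space sV"
  unfolding a_module_def by blast

lemma hom_fd:
  fixes sV :: "'k::field \<Rightarrow> 'v::ab_group_add \<Rightarrow> 'v" and sW :: "'k \<Rightarrow> 'w::ab_group_add \<Rightarrow> 'w"
  assumes V: "vector_space sV" and W: "vector_space sW" and fV: "fin_dim sV" and fW: "fin_dim sW"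
  shows "\<exists>F. finite F \<and> {h. Vector_Spaces.linear sV sW h} \<subseteq> module.span (\<lambda>c f v. sW c (f v)) F"
proof -
  interpret V: vector_space sV by fact
  interpret W: vector_space sW by fact
  interpret FS: vector_space "(\<lambda>c f v. sW c (f v)) :: 'k \<Rightarrow> ('v \<Rightarrow> 'w) \<Rightarrow> 'v \<Rightarrow> 'w" by (rule vs_fun[OF W])
  obtain B where B: "finite B" "V.span B = UNIV" using fV unfolding fin_dim_def by auto
  obtain C where C: "finite C" "W.span C = UNIV" using fW unfolding fin_dim_def by auto
  obtain B0 where B0: "B0 \<subseteq> B" "V.independent B0" "B \<subseteq> V.span B0"
    by (rule V.maximal_independent_subset)
  have spB0: "V.span B0 = UNIV" using B0(3) B(2) V.span_mono[OF B0(3)] V.span_span by auto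
  have finB0: "finite B0" using B0(1) B(1) finite_subset by auto
  define E where "E b w = (\<lambda>v. sW (V.representation B0 v b) w)" for b w
  define F where "F = (\<lambda>(b, w). E b w) ` (B0 \<times> C)"
  have finF: "finite F" unfolding F_def using finB0 C(1) by simp
  have Elin: "Vector_Spaces.linear sW (\<lambda>c f v. sW c (f v)) (E b)" for b
    unfolding Vector_Spaces.linear_iff using W FS.vector_space_axioms E_def
    by (auto simp: fun_eq_iff W.scale_right_distrib)
  have Ein: "E b w \<in> FS.span F" if "b \<in> B0" for b w
  proof -
    interpret El: Vector_Spaces.linear sW "\<lambda>c f v. sW c (f v)" "E b" by (rule Elin)
    have "w \<in> W.span C" using C(2) by auto
    then have "E b w \<in> E b ` W.span C" by auto
    also have "\<dots> = FS.span (E b ` C)" using El.span_image by simp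
    also have "\<dots> \<subseteq> FS.span F" by (rule FS.span_mono) (auto simp: F_def that)
    finally show ?thesis .
  qed
  have "h \<in> FS.span F" if h: "Vector_Spaces.linear sV sW h" for h
  proof -
    interpret hl: Vector_Spaces.linear sV sW h by (rule h)
    have "h = (\<Sum>b\<in>B0. E b (h b))"
    proof
      fix v
      have "v = (\<Sum>b\<in>B0. sV (V.representation B0 v b) b)"
        using V.sum_representation_eq[OF B0(2) _ finB0] spB0 by auto
      then have "h v = (\<Sum>b\<in>B0. sW (V.representation B0 v b) (h b))"
        by (metis (no_types, lifting) hl.scale hl.sum sum.cong)
      then show "h v = (\<Sum>b\<in>B0. E b (h b)) v" by (simp add: sum_fun_apply E_def)
    qed
    also have "\<dots> \<in> FS.span F" by (rule FS.span_sum) (use Ein in auto)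
    finally show ?thesis .
  qed
  then show ?thesis using finF by auto
qed

lemma hom_set_linear: "h \<in> hom_set sV aV sW aW \<Longrightarrow> Vector_Spaces.linear sV sW h"
  unfolding hom_set_def mod_hom_def by auto

lemma hom_set_fd:
  assumes "a_module sA sV aV" "a_module sA sW aW" "fin_dim sV" "fin_dim sW"
  shows "\<exists>F. finite F \<and> hom_set sV aV sW aW \<subseteq> module.span (\<lambda>c f v. sW c (f v)) F"
  using hom_fd[OF a_module_vs[OF assms(1)] a_module_vs[OF assms(2)] assms(3,4)] hom_set_linear by blast

lemma hom_set_subspace:
  fixes sV :: "'k::field \<Rightarrow> 'v::ab_group_add \<Rightarrow> 'v" and sW :: "'k \<Rightarrow> 'w::ab_group_add \<Rightarrow> 'w"
  assumes V: "a_module sA sV aV" and W: "a_module sA sW aW"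
  shows "module.subspace (\<lambda>c f v. sW c (f v)) (hom_set sV aV sW aW)"
proof -
  interpret V: vector_space sV by (rule a_module_vs[OF V])
  interpret W: vector_space sW by (rule a_module_vs[OF W])
  interpret FS: vector_space "(\<lambda>c f v. sW c (f v)) :: 'k \<Rightarrow> ('v \<Rightarrow> 'w) \<Rightarrow> 'v \<Rightarrow> 'w" by (rule vs_fun) unfold_locales
  have Wa: "\<And>a u v. aW a (u + v) = aW a u + aW a v" "\<And>c a v. aW a (sW c v) = sW c (aW a v)"
    using W unfolding a_module_def by auto
  have z: "0 \<in> hom_set sV aV sW aW"
    unfolding hom_set_def mod_hom_def Vector_Spaces.linear_iff
    using V.vector_space_axioms W.vector_space_axioms Wa(1)[of _ 0 0] by simp
  have a: "x + y \<in> hom_set sV aV sW aW" if "x \<in> hom_set sV aV sW aW" "y \<in> hom_set sV aV sW aW" for x y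
    using that unfolding hom_set_def mod_hom_def Vector_Spaces.linear_iff
    by (auto simp: W.scale_right_distrib Wa(1))
  have s: "(\<lambda>v. sW c (x v)) \<in> hom_set sV aV sW aW" if "x \<in> hom_set sV aV sW aW" for c x
    using that unfolding hom_set_def mod_hom_def Vector_Spaces.linear_iff
    by (auto simp: W.scale_right_distrib W.scale_left_commute Wa(2))
  show ?thesis unfolding FS.subspace_def using z a s by blast
qed

lemma am_add: "a_module sA sV act \<Longrightarrow> act a (u + v) = act a u + act a v"
  unfolding a_module_def by blast
lemma am_scale: "a_module sA sV act \<Longrightarrow> act a (sV c v) = sV c (act a v)"
  unfolding a_module_def by blast
lemma am_one: "a_module sA sV act \<Longrightarrow> act 1 v = v"
  unfolding a_module_def by blast
lemma am_mult: "a_module sA sV act \<Longrightarrow> act (a * b) v = act a (act b v)"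
  unfolding a_module_def by blast
lemma am_addl: "a_module sA sV act \<Longrightarrow> act (a + b) v = act a v + act b v"
  unfolding a_module_def by blast
lemma am_sA: "a_module sA sV act \<Longrightarrow> act (sA c a) v = sV c (act a v)"
  unfolding a_module_def by blast
lemma am_zero: "a_module sA sV act \<Longrightarrow> act a 0 = 0"
  using am_add[of sA sV act a 0 0] by simp
lemma am_diff: "a_module sA sV act \<Longrightarrow> act a (u - v) = act a u - act a v"
  using am_add[of sA sV act a "u - v" v] by (simp add: algebra_simps)
lemma am_neg: "a_module sA sV act \<Longrightarrow> act a (- v) = - act a v"
  using am_diff[of sA sV act a 0 v] am_zero[of sA sV act a] by simp

lemma mh_linear: "mod_hom sV aV sW aW h \<Longrightarrow> Vector_Spaces.linear sV sW h"
  unfolding mod_hom_def by blast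
lemma mh_act: "mod_hom sV aV sW aW h \<Longrightarrow> h (aV a v) = aW a (h v)"
  unfolding mod_hom_def by blast
lemma mh_add: "mod_hom sV aV sW aW h \<Longrightarrow> h (u + v) = h u + h v"
  unfolding mod_hom_def Vector_Spaces.linear_iff by blast
lemma mh_scale: "mod_hom sV aV sW aW h \<Longrightarrow> h (sV c v) = sW c (h v)"
  unfolding mod_hom_def Vector_Spaces.linear_iff by blast
lemma mh_zero: "mod_hom sV aV sW aW h \<Longrightarrow> h 0 = 0"
  using mh_add[of sV aV sW aW h 0 0] by simp
lemma mh_diff: "mod_hom sV aV sW aW h \<Longrightarrow> h (u - v) = h u - h v"
  using mh_add[of sV aV sW aW h "u - v" v] by (simp add: algebra_simps)

lemma lin_add: "Vector_Spaces.linear sV sW h \<Longrightarrow> h (u + v) = h u + h v"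
  unfolding Vector_Spaces.linear_iff by blast
lemma lin_scale: "Vector_Spaces.linear sV sW h \<Longrightarrow> h (sV c v) = sW c (h v)"
  unfolding Vector_Spaces.linear_iff by blast
lemma lin_zero: "Vector_Spaces.linear sV sW h \<Longrightarrow> h 0 = 0"
  using lin_add[of sV sW h 0 0] by simp
lemma lin_diff: "Vector_Spaces.linear sV sW h \<Longrightarrow> h (u - v) = h u - h v"
  using lin_add[of sV sW h "u - v" v] by (simp add: algebra_simps)

lemma linear_comp:
  "Vector_Spaces.linear sV sW h \<Longrightarrow> Vector_Spaces.linear sW sU k \<Longrightarrow> Vector_Spaces.linear sV sU (\<lambda>v. k (h v))"
  unfolding Vector_Spaces.linear_iff by auto

lemma mh_comp:
  "mod_hom sV aV sW aW h \<Longrightarrow> mod_hom sW aW sU aU k \<Longrightarrow> mod_hom sV aV sU aU (\<lambda>v. k (h v))"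
  unfolding mod_hom_def using linear_comp by metis

lemma mh_id: "a_module sA sV aV \<Longrightarrow> mod_hom sV aV sV aV (\<lambda>v. v)"
  unfolding mod_hom_def Vector_Spaces.linear_iff using a_module_vs by blast

lemma mh_inv:
  assumes h: "mod_hom sV aV sW aW h" and k: "Vector_Spaces.linear sW sV k"
    and hk: "\<And>w. h (k w) = w" and inj: "inj h" and W: "a_module sA sW aW"
  shows "mod_hom sW aW sV aV k"
  unfolding mod_hom_def
proof (intro conjI allI)
  show "Vector_Spaces.linear sW sV k" by fact
  fix a w
  have "h (k (aW a w)) = h (aV a (k w))" using hk mh_act[OF h] by simp
  then show "k (aW a w) = aV a (k w)" using inj by (simp add: inj_eq)
qed

lemma mh_through_inj:
  assumes f: "mod_hom sM aM sX aX f" and inj: "inj f"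
    and l: "mod_hom sZ aZ sX aX l" and rng: "\<And>z. l z \<in> range f"
    and V: "vector_space sZ" and M: "vector_space sM"
  shows "mod_hom sZ aZ sM aM (\<lambda>z. inv f (l z)) \<and> (\<forall>z. f (inv f (l z)) = l z)"
proof -
  have fi: "\<And>z. f (inv f (l z)) = l z" using rng by (simp add: f_inv_into_f)
  let ?k = "\<lambda>z. inv f (l z)"
  have ad: "?k (u + v) = ?k u + ?k v" for u v
  proof -
    have "f (?k (u + v)) = f (?k u + ?k v)"
      using fi[of "u+v"] fi[of u] fi[of v] mh_add[OF f, of "?k u" "?k v"] mh_add[OF l, of u v] by simp
    then show ?thesis by (rule injD[OF inj])
  qed
  have sc: "?k (sZ c v) = sM c (?k v)" for c v
  proof -
    have "f (?k (sZ c v)) = f (sM c (?k v))"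
      using fi[of "sZ c v"] fi[of v] mh_scale[OF f, of c "?k v"] mh_scale[OF l, of c v] by simp
    then show ?thesis by (rule injD[OF inj])
  qed
  have ac: "?k (aZ a v) = aM a (?k v)" for a v
  proof -
    have "f (?k (aZ a v)) = f (aM a (?k v))"
      using fi[of "aZ a v"] fi[of v] mh_act[OF f, of a "?k v"] mh_act[OF l, of a v] by simp
    then show ?thesis by (rule injD[OF inj])
  qed
  show ?thesis unfolding mod_hom_def Vector_Spaces.linear_iff using ad sc ac V M fi by blast
qed

lemma post_linear:
  assumes V: "vector_space sV" and W: "vector_space sW" and g: "Vector_Spaces.linear sV sW g"
  shows "Vector_Spaces.linear (\<lambda>c f v. sV c (f v)) (\<lambda>c f v. sW c (f v)) (\<lambda>l (z::'z). g (l z))"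
  unfolding Vector_Spaces.linear_iff using vs_fun[OF V] vs_fun[OF W] lin_add[OF g] lin_scale[OF g]
  by (auto simp: fun_eq_iff)

lemma pre_linear:
  assumes V: "vector_space sV"
  shows "Vector_Spaces.linear (\<lambda>c f v. sV c (f v)) (\<lambda>c f v. sV c (f v)) (\<lambda>h (z::'z). h (f z))"
  unfolding Vector_Spaces.linear_iff using vs_fun[OF V] vs_fun[OF V] by (auto simp: fun_eq_iff)

section \<open>Short exact sequences\<close>

lemma ses_parts:
  assumes "ses sM aM sX aX sN aN f g"
  shows "mod_hom sM aM sX aX f" "mod_hom sX aX sN aN g" "inj f" "surj g"
    "\<And>x. g x = 0 \<longleftrightarrow> x \<in> range f"
  using assms unfolding ses_def by auto

lemma ses_gf: "ses sM aM sX aX sN aN f g \<Longrightarrow> g (f m) = 0"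
  using ses_parts(5) by blast

lemma ses_klin_section:
  assumes "ses sM aM sX aX sN aN f g" "vector_space sX" "vector_space sN"
  obtains \<sigma> where "Vector_Spaces.linear sN sX \<sigma>" "\<And>n. g (\<sigma> n) = n"
proof -
  interpret vector_space_pair sX sN using assms(2,3) by (simp add: vector_space_pair_def)
  obtain \<sigma> where "Vector_Spaces.linear sN sX \<sigma>" "g \<circ> \<sigma> = id"
    using linear_surjective_right_inverse[OF mh_linear[OF ses_parts(2)[OF assms(1)]] ses_parts(4)[OF assms(1)]]
    by blast
  then show ?thesis using that by (auto simp: fun_eq_iff)
qed

lemma post_kernel:
  assumes s: "ses sM aM sX aX sN aN f g" and Z: "a_module sA sZ aZ" and M: "a_module sA sM aM"
  shows "hom_set sZ aZ sX aX \<inter> {l. (\<lambda>z. g (l z)) = 0} = (\<lambda>k z. f (k z)) ` hom_set sZ aZ sM aM"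
proof
  show "(\<lambda>k z. f (k z)) ` hom_set sZ aZ sM aM \<subseteq> hom_set sZ aZ sX aX \<inter> {l. (\<lambda>z. g (l z)) = 0}"
    using mh_comp[OF _ ses_parts(1)[OF s]] ses_gf[OF s] unfolding hom_set_def by (auto simp: fun_eq_iff)
next
  show "hom_set sZ aZ sX aX \<inter> {l. (\<lambda>z. g (l z)) = 0} \<subseteq> (\<lambda>k z. f (k z)) ` hom_set sZ aZ sM aM"
  proof
    fix l assume l: "l \<in> hom_set sZ aZ sX aX \<inter> {l. (\<lambda>z. g (l z)) = 0}"
    then have rng: "\<And>z. l z \<in> range f" using ses_parts(5)[OF s] by (auto simp: fun_eq_iff)
    have "mod_hom sZ aZ sM aM (\<lambda>z. inv f (l z)) \<and> (\<forall>z. f (inv f (l z)) = l z)"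
      by (rule mh_through_inj[OF ses_parts(1)[OF s] ses_parts(3)[OF s] _ rng a_module_vs[OF Z] a_module_vs[OF M]])
        (use l in \<open>auto simp: hom_set_def\<close>)
    then show "l \<in> (\<lambda>k z. f (k z)) ` hom_set sZ aZ sM aM"
      unfolding hom_set_def by (intro image_eqI[of _ _ "\<lambda>z. inv f (l z)"]) (auto simp: fun_eq_iff)
  qed
qed

lemma pre_kernel:
  assumes s: "ses sM aM sX aX sN aN f g" and Z: "a_module sA sZ aZ" and X: "a_module sA sX aX"
    and N: "a_module sA sN aN"
  shows "hom_set sX aX sZ aZ \<inter> {h. (\<lambda>m. h (f m)) = 0} = (\<lambda>k x. k (g x)) ` hom_set sN aN sZ aZ"
proof
  show "(\<lambda>k x. k (g x)) ` hom_set sN aN sZ aZ \<subseteq> hom_set sX aX sZ aZ \<inter> {h. (\<lambda>m. h (f m)) = 0}"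
  proof
    fix h assume "h \<in> (\<lambda>k x. k (g x)) ` hom_set sN aN sZ aZ"
    then obtain k where k: "mod_hom sN aN sZ aZ k" "h = (\<lambda>x. k (g x))" unfolding hom_set_def by auto
    have "mod_hom sX aX sZ aZ h" unfolding k(2) by (rule mh_comp[OF ses_parts(2)[OF s] k(1)])
    moreover have "(\<lambda>m. h (f m)) = 0" unfolding k(2) ses_gf[OF s] mh_zero[OF k(1)] by (simp add: fun_eq_iff)
    ultimately show "h \<in> hom_set sX aX sZ aZ \<inter> {h. (\<lambda>m. h (f m)) = 0}" unfolding hom_set_def by simp
  qed
next
  obtain \<sigma> where \<sigma>: "Vector_Spaces.linear sN sX \<sigma>" "\<And>n. g (\<sigma> n) = n"
    using ses_klin_section[OF s a_module_vs[OF X] a_module_vs[OF N]] by blast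
  show "hom_set sX aX sZ aZ \<inter> {h. (\<lambda>m. h (f m)) = 0} \<subseteq> (\<lambda>k x. k (g x)) ` hom_set sN aN sZ aZ"
  proof
    fix h assume h: "h \<in> hom_set sX aX sZ aZ \<inter> {h. (\<lambda>m. h (f m)) = 0}"
    have hm: "mod_hom sX aX sZ aZ h" using h by (auto simp: hom_set_def)
    have hf: "\<And>m. h (f m) = 0" using h by (auto simp: fun_eq_iff)
    have kill: "h u = h v" if "g u = g v" for u v
    proof -
      have "g (u - v) = 0" using that mh_diff[OF ses_parts(2)[OF s]] by simp
      then obtain m where "u - v = f m" using ses_parts(5)[OF s] by auto
      then have "h (u - v) = 0" using hf by simp
      then show ?thesis using mh_diff[OF hm] by simp
    qed
    have km: "mod_hom sN aN sZ aZ (\<lambda>n. h (\<sigma> n))"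
      unfolding mod_hom_def
    proof (intro conjI allI)
      show "Vector_Spaces.linear sN sZ (\<lambda>n. h (\<sigma> n))" by (rule linear_comp[OF \<sigma>(1) mh_linear[OF hm]])
      fix a n
      have "g (\<sigma> (aN a n)) = g (aX a (\<sigma> n))" using \<sigma>(2) mh_act[OF ses_parts(2)[OF s]] by simp
      then have "h (\<sigma> (aN a n)) = h (aX a (\<sigma> n))" by (rule kill)
      then show "h (\<sigma> (aN a n)) = aZ a (h (\<sigma> n))" using mh_act[OF hm] by simp
    qed
    have "h = (\<lambda>x. h (\<sigma> (g x)))"
    proof
      fix x show "h x = h (\<sigma> (g x))" by (rule kill) (simp add: \<sigma>(2))
    qed
    then show "h \<in> (\<lambda>k x. k (g x)) ` hom_set sN aN sZ aZ"
      using km unfolding hom_set_def by (intro image_eqI[of _ _ "\<lambda>n. h (\<sigma> n)"]) auto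
  qed
qed

lemma vsp_fun:
  assumes "vector_space s1" "vector_space s2"
  shows "vector_space_pair (\<lambda>c f (v::'a). s1 c (f v)) (\<lambda>c f (v::'b). s2 c (f v))"
  using vs_fun[OF assms(1)] vs_fun[OF assms(2)] by (simp add: vector_space_pair_def)

lemma dim_post:
  fixes sZ :: "'k::field \<Rightarrow> 'z::ab_group_add \<Rightarrow> 'z" and sM :: "'k \<Rightarrow> 'm::ab_group_add \<Rightarrow> 'm"
    and sX :: "'k \<Rightarrow> 'x::ab_group_add \<Rightarrow> 'x" and sN :: "'k \<Rightarrow> 'n::ab_group_add \<Rightarrow> 'n"
  assumes Z: "a_module sA sZ aZ" and M: "a_module sA sM aM" and X: "a_module sA sX aX"
    and N: "a_module sA sN aN"
    and fZ: "fin_dim sZ" and fM: "fin_dim sM" and fX: "fin_dim sX"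
    and s: "ses sM aM sX aX sN aN f g"
  shows "dim_hom sZ aZ sX aX = dim_hom sZ aZ sM aM
           + vector_space.dim (\<lambda>c f v. sN c (f v)) ((\<lambda>l z. g (l z)) ` hom_set sZ aZ sX aX)"
proof -
  interpret P: vector_space_pair "\<lambda>c f (v::'z). sX c (f v)" "\<lambda>c f (v::'z). sN c (f v)"
    by (rule vsp_fun[OF a_module_vs[OF X] a_module_vs[OF N]])
  interpret Q: vector_space_pair "\<lambda>c f (v::'z). sM c (f v)" "\<lambda>c f (v::'z). sX c (f v)"
    by (rule vsp_fun[OF a_module_vs[OF M] a_module_vs[OF X]])
  obtain F where F: "finite F" "hom_set sZ aZ sX aX \<subseteq> P.vs1.span F"
    using hom_set_fd[OF Z X fZ fX] by blast
  obtain F' where F': "finite F'" "hom_set sZ aZ sM aM \<subseteq> Q.vs1.span F'"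
    using hom_set_fd[OF Z M fZ fM] by blast
  have rn: "P.vs1.dim (hom_set sZ aZ sX aX) = P.vs1.dim (hom_set sZ aZ sX aX \<inter> {l. (\<lambda>z. g (l z)) = 0})
      + P.vs2.dim ((\<lambda>l z. g (l z)) ` hom_set sZ aZ sX aX)"
    by (rule P.rank_nullity[OF post_linear[OF a_module_vs[OF X] a_module_vs[OF N] mh_linear[OF ses_parts(2)[OF s]]]
          F hom_set_subspace[OF Z X]])
  have inj: "inj_on (\<lambda>k z. f (k z)) (hom_set sZ aZ sM aM)"
    using ses_parts(3)[OF s] by (auto simp: inj_on_def fun_eq_iff dest: injD)
  have di: "P.vs1.dim ((\<lambda>k z. f (k z)) ` hom_set sZ aZ sM aM) = Q.vs1.dim (hom_set sZ aZ sM aM)"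
    by (rule Q.dim_inj_image[OF post_linear[OF a_module_vs[OF M] a_module_vs[OF X] mh_linear[OF ses_parts(1)[OF s]]]
          F' hom_set_subspace[OF Z M] inj])
  show ?thesis unfolding dim_hom_def using rn di post_kernel[OF s Z M] by simp
qed

lemma dim_pre:
  fixes sZ :: "'k::field \<Rightarrow> 'z::ab_group_add \<Rightarrow> 'z" and sM :: "'k \<Rightarrow> 'm::ab_group_add \<Rightarrow> 'm"
    and sX :: "'k \<Rightarrow> 'x::ab_group_add \<Rightarrow> 'x" and sN :: "'k \<Rightarrow> 'n::ab_group_add \<Rightarrow> 'n"
  assumes Z: "a_module sA sZ aZ" and M: "a_module sA sM aM" and X: "a_module sA sX aX"
    and N: "a_module sA sN aN"
    and fZ: "fin_dim sZ" and fN: "fin_dim sN" and fX: "fin_dim sX"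
    and s: "ses sM aM sX aX sN aN f g"
  shows "dim_hom sX aX sZ aZ = dim_hom sN aN sZ aZ
           + vector_space.dim (\<lambda>c f v. sZ c (f v)) ((\<lambda>h m. h (f m)) ` hom_set sX aX sZ aZ)"
proof -
  interpret P: vector_space_pair "\<lambda>c f (v::'x). sZ c (f v)" "\<lambda>c f (v::'m). sZ c (f v)"
    by (rule vsp_fun[OF a_module_vs[OF Z] a_module_vs[OF Z]])
  interpret Q: vector_space_pair "\<lambda>c f (v::'n). sZ c (f v)" "\<lambda>c f (v::'x). sZ c (f v)"
    by (rule vsp_fun[OF a_module_vs[OF Z] a_module_vs[OF Z]])
  obtain F where F: "finite F" "hom_set sX aX sZ aZ \<subseteq> P.vs1.span F"
    using hom_set_fd[OF X Z fX fZ] by blast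
  obtain F' where F': "finite F'" "hom_set sN aN sZ aZ \<subseteq> Q.vs1.span F'"
    using hom_set_fd[OF N Z fN fZ] by blast
  have rn: "P.vs1.dim (hom_set sX aX sZ aZ) = P.vs1.dim (hom_set sX aX sZ aZ \<inter> {h. (\<lambda>m. h (f m)) = 0})
      + P.vs2.dim ((\<lambda>h m. h (f m)) ` hom_set sX aX sZ aZ)"
    by (rule P.rank_nullity[OF pre_linear[OF a_module_vs[OF Z]] F hom_set_subspace[OF X Z]])
  have inj: "inj_on (\<lambda>k x. k (g x)) (hom_set sN aN sZ aZ)"
  proof (rule inj_onI)
    fix k k' assume "(\<lambda>x. k (g x)) = (\<lambda>x. k' (g x))"
    then have "\<And>x. k (g x) = k' (g x)" by metis
    then show "k = k'" using ses_parts(4)[OF s] by (metis surjD ext)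
  qed
  have di: "P.vs1.dim ((\<lambda>k x. k (g x)) ` hom_set sN aN sZ aZ) = Q.vs1.dim (hom_set sN aN sZ aZ)"
    by (rule Q.dim_inj_image[OF pre_linear[OF a_module_vs[OF Z]] F' hom_set_subspace[OF N Z] inj])
  show ?thesis unfolding dim_hom_def using rn di pre_kernel[OF s Z X N] by simp
qed

lemma transport_module:
  fixes \<phi> :: "'e::ab_group_add \<Rightarrow> 'p::ab_group_add"
  assumes P: "a_module sA sP aP" and inj: "inj \<phi>"
    and add: "\<And>v w. \<phi> (v + w) = \<phi> v + \<phi> w"
    and sc: "\<And>c v. \<phi> (sE c v) = sP c (\<phi> v)"
    and ac: "\<And>r v. \<phi> (aE r v) = aP r (\<phi> v)"
  shows "a_module sA sE aE"
proof -
  interpret vP: vector_space sP by (rule a_module_vs[OF P])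
  have eq: "\<And>x y. \<phi> x = \<phi> y \<Longrightarrow> x = y" using inj by (rule injD)
  have vs: "vector_space sE"
    by unfold_locales (rule eq; simp add: add sc vP.scale_right_distrib vP.scale_left_distrib)+
  show ?thesis unfolding a_module_def
    apply (intro conjI allI)
     apply (rule vs)
    by (rule eq; simp add: add sc ac am_add[OF P] am_addl[OF P] am_one[OF P]
        am_mult[OF P] am_sA[OF P] am_scale[OF P])+
qed

definition prod_scale where "prod_scale s1 s2 = (\<lambda>c p. (s1 c (fst p), s2 c (snd p)))"
definition prod_act where "prod_act a1 a2 = (\<lambda>r p. (a1 r (fst p), a2 r (snd p)))"

lemma prod_module:
  assumes "a_module sA s1 a1" "a_module sA s2 a2"
  shows "a_module sA (prod_scale s1 s2) (prod_act a1 a2)"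
proof -
  interpret v1: vector_space s1 by (rule a_module_vs[OF assms(1)])
  interpret v2: vector_space s2 by (rule a_module_vs[OF assms(2)])
  have vs: "vector_space (prod_scale s1 s2)"
    by unfold_locales (auto simp: prod_scale_def v1.scale_right_distrib v1.scale_left_distrib
        v2.scale_right_distrib v2.scale_left_distrib)
  show ?thesis unfolding a_module_def using vs
    by (auto simp: prod_scale_def prod_act_def am_add[OF assms(1)] am_add[OF assms(2)]
        am_addl[OF assms(1)] am_addl[OF assms(2)] am_one[OF assms(1)] am_one[OF assms(2)]
        am_mult[OF assms(1)] am_mult[OF assms(2)] am_sA[OF assms(1)] am_sA[OF assms(2)]
        am_scale[OF assms(1)] am_scale[OF assms(2)])
qed

lemma ext_lift:
  fixes sA :: "'k::field \<Rightarrow> 'a::ring_1 \<Rightarrow> 'a"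
    and sX :: "'k \<Rightarrow> 'x::ab_group_add \<Rightarrow> 'x" and s1 :: "'k \<Rightarrow> 'x1::ab_group_add \<Rightarrow> 'x1"
    and s3 :: "'k \<Rightarrow> 'x3::ab_group_add \<Rightarrow> 'x3"
  assumes X: "a_module sA sX aX" and M1: "a_module sA s1 a1" and M3: "a_module sA s3 a3"
    and s: "ses s1 a1 sX aX s3 a3 f' g'" and ext: "ext1_self_zero sA s1 a1"
    and h: "mod_hom s1 a1 s3 a3 h"
  shows "\<exists>l. mod_hom s1 a1 sX aX l \<and> (\<forall>p. g' (l p) = h p)"
proof -
  interpret v1: vector_space s1 by (rule a_module_vs[OF M1])
  interpret vX: vector_space sX by (rule a_module_vs[OF X])
  obtain \<sigma> where \<sigma>: "Vector_Spaces.linear s3 sX \<sigma>" "\<And>n. g' (\<sigma> n) = n"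
    using ses_klin_section[OF s a_module_vs[OF X] a_module_vs[OF M3]] by blast
  note f' = ses_parts(1)[OF s] and g' = ses_parts(2)[OF s] and injf' = ses_parts(3)[OF s]
  define \<phi> :: "'x1 \<times> 'x1 \<Rightarrow> 'x \<times> 'x1" where "\<phi> v = (f' (fst v) + \<sigma> (h (snd v)), snd v)" for v
  define \<psi> :: "'x \<times> 'x1 \<Rightarrow> 'x1 \<times> 'x1" where "\<psi> w = (inv f' (fst w - \<sigma> (h (snd w))), snd w)" for w
  define PB where "PB = {w. g' (fst w) = h (snd w)}"
  define aP where "aP = prod_act aX a1"
  define sP where "sP = prod_scale sX s1"
  define sE where "sE = prod_scale s1 s1"
  define aE where "aE r v = \<psi> (aP r (\<phi> v))" for r v
  have P: "a_module sA sP aP" unfolding aP_def sP_def by (rule prod_module[OF X M1])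
  have inj\<phi>: "inj \<phi>"
  proof (rule injI)
    fix v w assume "\<phi> v = \<phi> w"
    then have "snd v = snd w" "f' (fst v) = f' (fst w)" unfolding \<phi>_def by auto
    then show "v = w" using injf' by (simp add: inj_eq prod_eq_iff)
  qed
  have \<phi>PB: "\<phi> v \<in> PB" for v
    unfolding \<phi>_def PB_def using mh_add[OF g'] ses_gf[OF s] \<sigma>(2) by simp
  have \<phi>\<psi>: "\<phi> (\<psi> w) = w" if "w \<in> PB" for w
  proof -
    have "g' (fst w - \<sigma> (h (snd w))) = 0" using that mh_diff[OF g'] \<sigma>(2) unfolding PB_def by simp
    then have "fst w - \<sigma> (h (snd w)) \<in> range f'" using ses_parts(5)[OF s] by blast
    then have "f' (inv f' (fst w - \<sigma> (h (snd w)))) = fst w - \<sigma> (h (snd w))" by (rule f_inv_into_f)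
    then show ?thesis unfolding \<phi>_def \<psi>_def by (simp add: prod_eq_iff)
  qed
  have aPB: "aP r w \<in> PB" if "w \<in> PB" for r w
    using that unfolding PB_def aP_def prod_act_def using mh_act[OF g'] mh_act[OF h] by simp
  have \<phi>aE: "\<phi> (aE r v) = aP r (\<phi> v)" for r v
    unfolding aE_def by (rule \<phi>\<psi>[OF aPB[OF \<phi>PB]])
  have \<phi>add: "\<phi> (v + w) = \<phi> v + \<phi> w" for v w
  proof -
    have "f' (fst (v + w)) + \<sigma> (h (snd (v + w))) = (f' (fst v) + \<sigma> (h (snd v))) + (f' (fst w) + \<sigma> (h (snd w)))"
      unfolding fst_add snd_add mh_add[OF f'] mh_add[OF h] lin_add[OF \<sigma>(1)] by (simp only: add_ac)
    then show ?thesis unfolding \<phi>_def by (simp add: prod_eq_iff)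
  qed
  have \<phi>sc: "\<phi> (sE c v) = sP c (\<phi> v)" for c v
  proof -
    have "f' (fst (sE c v)) + \<sigma> (h (snd (sE c v))) = sX c (f' (fst v) + \<sigma> (h (snd v)))"
      unfolding sE_def prod_scale_def fst_conv snd_conv mh_scale[OF f'] mh_scale[OF h] lin_scale[OF \<sigma>(1)]
        vX.scale_right_distrib ..
    moreover have "snd (sE c v) = s1 c (snd v)" by (simp add: sE_def prod_scale_def)
    ultimately show ?thesis unfolding \<phi>_def sP_def prod_scale_def by simp
  qed
  have E: "a_module sA sE aE"
    by (rule transport_module[where sP=sP and aP=aP and \<phi>=\<phi>]) (rule P, rule inj\<phi>, rule \<phi>add, rule \<phi>sc, rule \<phi>aE)
  interpret vE: vector_space sE by (rule a_module_vs[OF E])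
  define F :: "'x1 \<Rightarrow> 'x1 \<times> 'x1" where "F a = (a, 0)" for a
  define G :: "'x1 \<times> 'x1 \<Rightarrow> 'x1" where "G = snd"
  have h0: "h 0 = 0" by (rule mh_zero[OF h])
  have s0: "\<sigma> 0 = 0" by (rule lin_zero[OF \<sigma>(1)])
  have Fh: "mod_hom s1 a1 sE aE F"
    unfolding mod_hom_def Vector_Spaces.linear_iff
  proof (intro conjI allI)
    show "vector_space s1" "vector_space sE" by (rule v1.vector_space_axioms, rule vE.vector_space_axioms)
    show "F (x + y) = F x + F y" for x y by (simp add: F_def)
    show "F (s1 c x) = sE c (F x)" for c x by (simp add: F_def sE_def prod_scale_def)
    fix r a
    have "\<phi> (F (a1 r a)) = \<phi> (aE r (F a))"
      unfolding \<phi>aE by (simp add: \<phi>_def F_def aP_def prod_act_def h0 s0 mh_act[OF f'] am_zero[OF M1])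
    then show "F (a1 r a) = aE r (F a)" using inj\<phi> by (rule injD[rotated])
  qed
  have Gh: "mod_hom sE aE s1 a1 G"
    unfolding mod_hom_def Vector_Spaces.linear_iff
  proof (intro conjI allI)
    show "vector_space s1" "vector_space sE" by (rule v1.vector_space_axioms, rule vE.vector_space_axioms)
    show "G (x + y) = G x + G y" for x y by (simp add: G_def)
    show "G (sE c x) = s1 c (G x)" for c x by (simp add: G_def sE_def prod_scale_def)
    fix r v
    have "snd (\<phi> (aE r v)) = a1 r (snd (\<phi> v))" unfolding \<phi>aE by (simp add: aP_def prod_act_def)
    then show "G (aE r v) = a1 r (G v)" by (simp add: G_def \<phi>_def)
  qed
  have sesE: "ses s1 a1 sE aE s1 a1 F G"
  proof -
    have "inj F" by (rule injI) (simp add: F_def)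
    moreover have "surj G"
    proof (rule surjI)
      show "G (0, y) = y" for y by (simp add: G_def)
    qed
    moreover have "range F = {n. G n = 0}"
    proof
      show "range F \<subseteq> {n. G n = 0}" by (auto simp: F_def G_def)
      show "{n. G n = 0} \<subseteq> range F"
      proof
        fix n assume "n \<in> {n. G n = 0}"
        then have "n = F (fst n)" by (simp add: F_def G_def prod_eq_iff)
        then show "n \<in> range F" by (rule range_eqI)
      qed
    qed
    ultimately show ?thesis unfolding ses_def using Fh Gh by blast
  qed
  have "ses_splits s1 a1 sE aE s1 a1 F G"
    using ext[unfolded ext1_self_zero_def, rule_format, OF E sesE] .
  then obtain sec where sec: "mod_hom s1 a1 sE aE sec" "\<And>p. G (sec p) = p"
    unfolding ses_splits_def by blast
  define l where "l p = fst (\<phi> (sec p))" for p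
  have lh: "mod_hom s1 a1 sX aX l"
    unfolding mod_hom_def Vector_Spaces.linear_iff
  proof (intro conjI allI)
    show "vector_space s1" "vector_space sX" by (rule v1.vector_space_axioms, rule vX.vector_space_axioms)
    show "l (x + y) = l x + l y" for x y unfolding l_def mh_add[OF sec(1)] \<phi>add by simp
    show "l (s1 c x) = sX c (l x)" for c x unfolding l_def mh_scale[OF sec(1)] \<phi>sc
      by (simp add: sP_def prod_scale_def)
    show "l (a1 r x) = aX r (l x)" for r x unfolding l_def mh_act[OF sec(1)] \<phi>aE
      by (simp add: aP_def prod_act_def)
  qed
  have "g' (l p) = h p" for p
  proof -
    have "g' (l p) = h (snd (sec p))" using \<phi>PB[of "sec p"] unfolding l_def PB_def \<phi>_def by simp
    then show ?thesis using sec(2) by (simp add: G_def)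
  qed
  then show ?thesis using lh by blast
qed

lemma mh_minus_fun:
  assumes "mod_hom sV aV sW aW h" "mod_hom sV aV sW aW k" "a_module sA sW aW"
  shows "mod_hom sV aV sW aW (\<lambda>v. h v - k v)"
proof -
  interpret vW: vector_space sW by (rule a_module_vs[OF assms(3)])
  show ?thesis
    unfolding mod_hom_def Vector_Spaces.linear_iff
    using mh_linear[OF assms(1)] mh_add[OF assms(1)] mh_add[OF assms(2)] mh_scale[OF assms(1)]
      mh_scale[OF assms(2)] mh_act[OF assms(1)] mh_act[OF assms(2)] am_diff[OF assms(3)]
    unfolding Vector_Spaces.linear_iff by (simp add: vW.scale_right_diff_distrib)
qed

lemma retraction_from_section:
  assumes s: "ses sM aM sX aX sN aN f g" and X: "a_module sA sX aX" and M: "a_module sA sM aM"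
    and sec: "mod_hom sN aN sX aX t" "\<And>n. g (t n) = n"
  shows "\<exists>\<rho>. mod_hom sX aX sM aM \<rho> \<and> (\<forall>m. \<rho> (f m) = m)"
proof -
  have l: "mod_hom sX aX sX aX (\<lambda>u. u - t (g u))"
    by (rule mh_minus_fun[OF mh_id[OF X] mh_comp[OF ses_parts(2)[OF s] sec(1)] X])
  have rng: "u - t (g u) \<in> range f" for u
  proof -
    have "g (u - t (g u)) = 0" using mh_diff[OF ses_parts(2)[OF s]] sec(2) by simp
    then show ?thesis using ses_parts(5)[OF s] by blast
  qed
  have r: "mod_hom sX aX sM aM (\<lambda>u. inv f (u - t (g u)))"
    using mh_through_inj[OF ses_parts(1)[OF s] ses_parts(3)[OF s] l rng a_module_vs[OF X] a_module_vs[OF M]] by blast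
  have "inv f (f m - t (g (f m))) = m" for m
    using ses_gf[OF s] mh_zero[OF sec(1)] ses_parts(3)[OF s] by simp
  then show ?thesis using r by blast
qed

lemma section_from_retraction:
  assumes s: "ses sM aM sX aX sN aN f g" and X: "a_module sA sX aX" and N: "a_module sA sN aN"
    and r: "mod_hom sX aX sM aM r" "\<And>m. r (f m) = m"
  shows "ses_splits sM aM sX aX sN aN f g"
proof -
  interpret vX: vector_space sX by (rule a_module_vs[OF X])
  obtain \<sigma> where \<sigma>: "Vector_Spaces.linear sN sX \<sigma>" "\<And>n. g (\<sigma> n) = n"
    using ses_klin_section[OF s a_module_vs[OF X] a_module_vs[OF N]] by blast
  note f = ses_parts(1)[OF s] and g = ses_parts(2)[OF s]
  define t where "t n = \<sigma> n - f (r (\<sigma> n))" for n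
  have fr: "f (r (f m)) = f m" for m using r(2) by simp
  have P: "u - f (r u) = v - f (r v)" if "g u = g v" for u v
  proof -
    have "g (u - v) = 0" using that mh_diff[OF g] by simp
    then obtain m where m: "u - v = f m" using ses_parts(5)[OF s] by auto
    then have "u = v + f m" by (simp add: algebra_simps)
    then show ?thesis using mh_add[OF r(1)] mh_add[OF f] r(2) by simp
  qed
  have lin: "Vector_Spaces.linear sN sX t"
  proof -
    have "Vector_Spaces.linear sN sX (\<lambda>n. f (r (\<sigma> n)))"
      by (rule linear_comp[OF \<sigma>(1) linear_comp[OF mh_linear[OF r(1)] mh_linear[OF f]]])
    then show ?thesis using \<sigma>(1) unfolding t_def Vector_Spaces.linear_iff
      by (simp add: vX.scale_right_diff_distrib)
  qed
  have act: "t (aN a n) = aX a (t n)" for a n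
  proof -
    have "g (\<sigma> (aN a n)) = g (aX a (\<sigma> n))" using \<sigma>(2) mh_act[OF g] by simp
    then have "t (aN a n) = aX a (\<sigma> n) - f (r (aX a (\<sigma> n)))" unfolding t_def by (rule P)
    also have "\<dots> = aX a (t n)" unfolding t_def am_diff[OF X] mh_act[OF r(1)] mh_act[OF f] ..
    finally show ?thesis .
  qed
  have "g (t n) = n" for n unfolding t_def mh_diff[OF g] ses_gf[OF s] \<sigma>(2) by simp
  then show ?thesis unfolding ses_splits_def mod_hom_def using lin act by blast
qed

lemma image_subspace_fun:
  assumes "vector_space_pair s1 s2" "Vector_Spaces.linear s1 s2 L" "module.subspace s1 S"
  shows "module.subspace s2 (L ` S)"
proof -
  interpret Vector_Spaces.linear s1 s2 L by fact
  show ?thesis by (rule subspace_image[OF assms(3)])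
qed

lemma split1:
  fixes sA :: "'k::field \<Rightarrow> 'a::ring_1 \<Rightarrow> 'a"
    and sX :: "'k \<Rightarrow> 'x::ab_group_add \<Rightarrow> 'x" and aX :: "'a \<Rightarrow> 'x \<Rightarrow> 'x"
    and s1 :: "'k \<Rightarrow> 'x1::ab_group_add \<Rightarrow> 'x1" and a1 :: "'a \<Rightarrow> 'x1 \<Rightarrow> 'x1"
    and s2 :: "'k \<Rightarrow> 'x2::ab_group_add \<Rightarrow> 'x2" and a2 :: "'a \<Rightarrow> 'x2 \<Rightarrow> 'x2"
    and s3 :: "'k \<Rightarrow> 'x3::ab_group_add \<Rightarrow> 'x3" and a3 :: "'a \<Rightarrow> 'x3 \<Rightarrow> 'x3"
  assumes X: "a_module sA sX aX" and M1: "a_module sA s1 a1" and M2: "a_module sA s2 a2"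
    and M3: "a_module sA s3 a3"
    and fX: "fin_dim sX" and f1: "fin_dim s1" and f2: "fin_dim s2" and f3: "fin_dim s3"
    and e1: "ses s2 a2 sX aX s1 a1 f g"
    and e2: "ses s1 a1 sX aX s3 a3 f' g'"
    and ext: "ext1_self_zero sA s1 a1"
    and d: "dim_hom s1 a1 s2 a2 = dim_hom s1 a1 s3 a3"
  shows "ses_splits s2 a2 sX aX s1 a1 f g"
proof -
  interpret V1: vector_space "\<lambda>c f (v::'x1). s1 c (f v)" by (rule vs_fun[OF a_module_vs[OF M1]])
  define H1 where "H1 = hom_set s1 a1 sX aX"
  have d1: "dim_hom s1 a1 sX aX = dim_hom s1 a1 s2 a2 + V1.dim ((\<lambda>l z. g (l z)) ` H1)"
    unfolding H1_def by (rule dim_post[OF M1 M2 X M1 f1 f2 fX e1])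
  have d2: "dim_hom s1 a1 sX aX = dim_hom s1 a1 s1 a1
     + vector_space.dim (\<lambda>c f (v::'x1). s3 c (f v)) ((\<lambda>l z. g' (l z)) ` H1)"
    unfolding H1_def by (rule dim_post[OF M1 M1 X M3 f1 f1 fX e2])
  have im2: "(\<lambda>l z. g' (l z)) ` H1 = hom_set s1 a1 s3 a3"
  proof
    show "(\<lambda>l z. g' (l z)) ` H1 \<subseteq> hom_set s1 a1 s3 a3"
      unfolding H1_def hom_set_def using mh_comp[OF _ ses_parts(2)[OF e2]] by auto
    show "hom_set s1 a1 s3 a3 \<subseteq> (\<lambda>l z. g' (l z)) ` H1"
    proof
      fix h assume "h \<in> hom_set s1 a1 s3 a3"
      then obtain l where l: "mod_hom s1 a1 sX aX l" "\<And>p. g' (l p) = h p"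
        using ext_lift[OF X M1 M3 e2 ext] unfolding hom_set_def by blast
      have "h = (\<lambda>z. g' (l z))" using l(2) by (simp add: fun_eq_iff)
      then show "h \<in> (\<lambda>l z. g' (l z)) ` H1" using l(1) unfolding H1_def hom_set_def by blast
    qed
  qed
  have eqd: "V1.dim ((\<lambda>l z. g (l z)) ` H1) = V1.dim (hom_set s1 a1 s1 a1)"
    using d1 d2 d unfolding im2 dim_hom_def by simp
  have sub: "(\<lambda>l z. g (l z)) ` H1 \<subseteq> hom_set s1 a1 s1 a1"
    unfolding H1_def hom_set_def using mh_comp[OF _ ses_parts(2)[OF e1]] by auto
  have ssp: "V1.subspace ((\<lambda>l z. g (l z)) ` H1)"
    unfolding H1_def
    by (rule image_subspace_fun[OF vsp_fun[OF a_module_vs[OF X] a_module_vs[OF M1]]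
          post_linear[OF a_module_vs[OF X] a_module_vs[OF M1] mh_linear[OF ses_parts(2)[OF e1]]]
          hom_set_subspace[OF M1 X]])
  obtain F where F: "finite F" "hom_set s1 a1 s1 a1 \<subseteq> V1.span F"
    using hom_set_fd[OF M1 M1 f1 f1] by blast
  have eq: "(\<lambda>l z. g (l z)) ` H1 = hom_set s1 a1 s1 a1"
    by (rule V1.fd_subspace_eq[OF F hom_set_subspace[OF M1 M1] ssp sub]) (simp add: eqd)
  have "(\<lambda>v. v) \<in> hom_set s1 a1 s1 a1" unfolding hom_set_def using mh_id[OF M1] by simp
  then obtain l where l: "l \<in> H1" "(\<lambda>z. g (l z)) = (\<lambda>v. v)" unfolding eq[symmetric] by auto
  then show ?thesis unfolding ses_splits_def H1_def hom_set_def by (metis mem_Collect_eq)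
qed

lemma split2:
  fixes sA :: "'k::field \<Rightarrow> 'a::ring_1 \<Rightarrow> 'a"
    and sX :: "'k \<Rightarrow> 'x::ab_group_add \<Rightarrow> 'x" and aX :: "'a \<Rightarrow> 'x \<Rightarrow> 'x"
    and s1 :: "'k \<Rightarrow> 'x1::ab_group_add \<Rightarrow> 'x1" and a1 :: "'a \<Rightarrow> 'x1 \<Rightarrow> 'x1"
    and s2 :: "'k \<Rightarrow> 'x2::ab_group_add \<Rightarrow> 'x2" and a2 :: "'a \<Rightarrow> 'x2 \<Rightarrow> 'x2"
    and s3 :: "'k \<Rightarrow> 'x3::ab_group_add \<Rightarrow> 'x3" and a3 :: "'a \<Rightarrow> 'x3 \<Rightarrow> 'x3"
  assumes X: "a_module sA sX aX" and M1: "a_module sA s1 a1" and M2: "a_module sA s2 a2"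
    and M3: "a_module sA s3 a3"
    and fX: "fin_dim sX" and f1: "fin_dim s1" and f2: "fin_dim s2" and f3: "fin_dim s3"
    and e1: "ses s2 a2 sX aX s1 a1 f g"
    and e2: "ses s1 a1 sX aX s3 a3 f' g'"
    and sp1: "ses_splits s2 a2 sX aX s1 a1 f g"
    and d: "dim_hom s2 a2 s1 a1 = dim_hom s3 a3 s1 a1"
  shows "ses_splits s1 a1 sX aX s3 a3 f' g'"
proof -
  interpret V1: vector_space "\<lambda>c f (v::'x1). s1 c (f v)" by (rule vs_fun[OF a_module_vs[OF M1]])
  define H2 where "H2 = hom_set sX aX s1 a1"
  have d3: "dim_hom sX aX s1 a1 = dim_hom s1 a1 s1 a1
      + vector_space.dim (\<lambda>c f (v::'x2). s1 c (f v)) ((\<lambda>h m. h (f m)) ` H2)"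
    unfolding H2_def by (rule dim_pre[OF M1 M2 X M1 f1 f1 fX e1])
  have d4: "dim_hom sX aX s1 a1 = dim_hom s3 a3 s1 a1 + V1.dim ((\<lambda>h m. h (f' m)) ` H2)"
    unfolding H2_def by (rule dim_pre[OF M1 M1 X M3 f1 f3 fX e2])
  obtain t where t: "mod_hom s1 a1 sX aX t" "\<And>n. g (t n) = n"
    using sp1 unfolding ses_splits_def by blast
  obtain \<rho> where \<rho>: "mod_hom sX aX s2 a2 \<rho>" "\<And>m. \<rho> (f m) = m"
    using retraction_from_section[OF e1 X M2 t] by blast
  have im1: "(\<lambda>h m. h (f m)) ` H2 = hom_set s2 a2 s1 a1"
  proof
    show "(\<lambda>h m. h (f m)) ` H2 \<subseteq> hom_set s2 a2 s1 a1"
      unfolding H2_def hom_set_def using mh_comp[OF ses_parts(1)[OF e1]] by auto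
    show "hom_set s2 a2 s1 a1 \<subseteq> (\<lambda>h m. h (f m)) ` H2"
    proof
      fix k assume k: "k \<in> hom_set s2 a2 s1 a1"
      have "k = (\<lambda>m. (\<lambda>u. k (\<rho> u)) (f m))" using \<rho>(2) by simp
      moreover have "(\<lambda>u. k (\<rho> u)) \<in> H2"
        unfolding H2_def hom_set_def using mh_comp[OF \<rho>(1)] k unfolding hom_set_def by auto
      ultimately show "k \<in> (\<lambda>h m. h (f m)) ` H2" by (rule image_eqI)
    qed
  qed
  have eqd: "V1.dim ((\<lambda>h m. h (f' m)) ` H2) = V1.dim (hom_set s1 a1 s1 a1)"
    using d3 d4 d unfolding im1 dim_hom_def by simp
  have sub: "(\<lambda>h m. h (f' m)) ` H2 \<subseteq> hom_set s1 a1 s1 a1"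
    unfolding H2_def hom_set_def using mh_comp[OF ses_parts(1)[OF e2]] by auto
  have ssp: "V1.subspace ((\<lambda>h m. h (f' m)) ` H2)"
    unfolding H2_def
    by (rule image_subspace_fun[OF vsp_fun[OF a_module_vs[OF M1] a_module_vs[OF M1]]
          pre_linear[OF a_module_vs[OF M1]] hom_set_subspace[OF X M1]])
  obtain F where F: "finite F" "hom_set s1 a1 s1 a1 \<subseteq> V1.span F"
    using hom_set_fd[OF M1 M1 f1 f1] by blast
  have eq: "(\<lambda>h m. h (f' m)) ` H2 = hom_set s1 a1 s1 a1"
    by (rule V1.fd_subspace_eq[OF F hom_set_subspace[OF M1 M1] ssp sub]) (simp add: eqd)
  have "(\<lambda>v. v) \<in> hom_set s1 a1 s1 a1" unfolding hom_set_def using mh_id[OF M1] by simp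
  then obtain r where r: "r \<in> H2" "(\<lambda>m. r (f' m)) = (\<lambda>v. v)" unfolding eq[symmetric] by auto
  have r': "mod_hom sX aX s1 a1 r" "\<And>m. r (f' m) = m"
    using r unfolding H2_def hom_set_def by (auto dest: fun_cong)
  show ?thesis by (rule section_from_retraction[OF e2 X M3 r'])
qed

locale amod =
  fixes sA :: "'k::field \<Rightarrow> 'a::ring_1 \<Rightarrow> 'a" and sV :: "'k \<Rightarrow> 'v::ab_group_add \<Rightarrow> 'v"
    and aV :: "'a \<Rightarrow> 'v \<Rightarrow> 'v"
  assumes am: "a_module sA sV aV" and fdV: "fin_dim sV"
begin

sublocale vs: vector_space sV by (rule a_module_vs[OF am])

lemma fdF: obtains F where "finite F" "\<And>S. S \<subseteq> vs.span F"
  using fdV unfolding fin_dim_def by auto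

lemma act_add: "aV a (u + v) = aV a u + aV a v" by (rule am_add[OF am])
lemma act_diff: "aV a (u - v) = aV a u - aV a v" by (rule am_diff[OF am])
lemma act_zero: "aV a 0 = 0" by (rule am_zero[OF am])
lemma act_neg: "aV a (- v) = - aV a v" by (rule am_neg[OF am])

lemma sV_act: "sV c v = aV (sA c 1) v"
  using am_sA[OF am, of c 1 v] am_one[OF am, of v] by simp

lemma neg_act: "- v = aV (-1) v"
proof -
  have z: "aV 0 v = 0" using am_addl[OF am, of 0 0 v] by simp
  have "aV (1 + -1) v = aV 1 v + aV (-1) v" by (rule am_addl[OF am])
  then have "0 = v + aV (-1) v" using z am_one[OF am] by simp
  then show ?thesis using minus_unique[of v "aV (-1) v"] by simp
qed

definition submod :: "'v set \<Rightarrow> bool" where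
  "submod S \<longleftrightarrow> 0 \<in> S \<and> (\<forall>x\<in>S. \<forall>y\<in>S. x + y \<in> S) \<and> (\<forall>a. \<forall>x\<in>S. aV a x \<in> S)"

lemma submodD:
  assumes "submod S"
  shows "0 \<in> S" "x \<in> S \<Longrightarrow> y \<in> S \<Longrightarrow> x + y \<in> S" "x \<in> S \<Longrightarrow> aV a x \<in> S"
    "x \<in> S \<Longrightarrow> - x \<in> S" "x \<in> S \<Longrightarrow> y \<in> S \<Longrightarrow> x - y \<in> S" "x \<in> S \<Longrightarrow> sV c x \<in> S"
proof -
  show "0 \<in> S" "x \<in> S \<Longrightarrow> y \<in> S \<Longrightarrow> x + y \<in> S" "x \<in> S \<Longrightarrow> aV a x \<in> S"
    using assms unfolding submod_def by auto
  show n: "x \<in> S \<Longrightarrow> - x \<in> S" for x using assms unfolding submod_def neg_act by auto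
  show "x \<in> S \<Longrightarrow> y \<in> S \<Longrightarrow> x - y \<in> S" using n[of y] assms unfolding submod_def
    by (metis diff_conv_add_uminus)
  show "x \<in> S \<Longrightarrow> sV c x \<in> S" using assms unfolding submod_def sV_act by auto
qed

lemma submod_subspace: assumes "submod S" shows "vs.subspace S"
  by (rule vs.subspaceI) (simp_all add: submodD[OF assms])

lemma submod_zero: "submod {0}"
  unfolding submod_def by (auto simp: act_zero)

lemma submod_UNIV: "submod UNIV"
  unfolding submod_def by auto

lemma submod_inter: "submod S \<Longrightarrow> submod T \<Longrightarrow> submod (S \<inter> T)"
  unfolding submod_def by auto

definition shom :: "'v set \<Rightarrow> 'v set \<Rightarrow> ('v \<Rightarrow> 'v) \<Rightarrow> bool" where
  "shom S T \<phi> \<longleftrightarrow> (\<forall>x\<in>S. \<phi> x \<in> T) \<and> (\<forall>x\<in>S. \<forall>y\<in>S. \<phi> (x + y) = \<phi> x + \<phi> y)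
     \<and> (\<forall>a. \<forall>x\<in>S. \<phi> (aV a x) = aV a (\<phi> x))"

lemma shomD:
  assumes "shom S T \<phi>"
  shows "x \<in> S \<Longrightarrow> \<phi> x \<in> T" "x \<in> S \<Longrightarrow> y \<in> S \<Longrightarrow> \<phi> (x + y) = \<phi> x + \<phi> y"
    "x \<in> S \<Longrightarrow> \<phi> (aV a x) = aV a (\<phi> x)"
  using assms unfolding shom_def by auto

lemma shom_zero: "submod S \<Longrightarrow> shom S T \<phi> \<Longrightarrow> \<phi> 0 = 0"
proof -
  assume a: "submod S" "shom S T \<phi>"
  have "\<phi> (0 + 0) = \<phi> 0 + \<phi> 0" by (rule shomD(2)[OF a(2) submodD(1)[OF a(1)] submodD(1)[OF a(1)]])
  then show ?thesis by simp
qed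

lemma shom_neg: "shom S T \<phi> \<Longrightarrow> x \<in> S \<Longrightarrow> \<phi> (- x) = - \<phi> x"
  using shomD(3)[of S T \<phi> x "-1"] by (simp only: neg_act[symmetric])

lemma shom_diff: "submod S \<Longrightarrow> shom S T \<phi> \<Longrightarrow> x \<in> S \<Longrightarrow> y \<in> S \<Longrightarrow> \<phi> (x - y) = \<phi> x - \<phi> y"
proof -
  assume a: "submod S" "shom S T \<phi>" "x \<in> S" "y \<in> S"
  have "\<phi> (x + - y) = \<phi> x + \<phi> (- y)" using shomD(2)[OF a(2) a(3) submodD(4)[OF a(1) a(4)]] .
  have "\<phi> (x - y) = \<phi> (x + - y)" by (simp only: diff_conv_add_uminus)
  also have "\<dots> = \<phi> x + - \<phi> y" using shom_neg[OF a(2) a(4)] \<open>\<phi> (x + - y) = \<phi> x + \<phi> (- y)\<close> by (simp only:)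
  also have "\<dots> = \<phi> x - \<phi> y" by (simp only: diff_conv_add_uminus)
  finally show ?thesis .
qed

lemma shom_scale: "shom S T \<phi> \<Longrightarrow> x \<in> S \<Longrightarrow> \<phi> (sV c x) = sV c (\<phi> x)"
  unfolding sV_act by (rule shomD(3))

lemma shom_mono: "shom S T \<phi> \<Longrightarrow> S' \<subseteq> S \<Longrightarrow> T \<subseteq> T' \<Longrightarrow> shom S' T' \<phi>"
  unfolding shom_def by blast

lemma shom_comp: "shom S T \<phi> \<Longrightarrow> shom T U \<psi> \<Longrightarrow> shom S U (\<lambda>x. \<psi> (\<phi> x))"
  unfolding shom_def by auto

lemma shom_id: "shom S S (\<lambda>x. x)"
  unfolding shom_def by auto

lemma shom_cong:
  assumes "shom S T \<phi>" "submod S" "\<And>x. x \<in> S \<Longrightarrow> \<psi> x = \<phi> x" shows "shom S T \<psi>"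
  using assms(1) unfolding shom_def by (simp add: assms(3) submodD[OF assms(2)])

lemma shom_inv:
  assumes S: "submod S" and h: "shom S T \<phi>" and b: "bij_betw \<phi> S T"
  shows "shom T S (inv_into S \<phi>)" "bij_betw (inv_into S \<phi>) T S"
proof -
  have inj: "inj_on \<phi> S" and im: "\<phi> ` S = T" using b unfolding bij_betw_def by auto
  have iS: "inv_into S \<phi> t \<in> S" if "t \<in> T" for t using that im by (auto intro: inv_into_into)
  have fi: "\<phi> (inv_into S \<phi> t) = t" if "t \<in> T" for t using that im by (auto intro: f_inv_into_f)
  show "shom T S (inv_into S \<phi>)"
    unfolding shom_def
  proof (intro conjI ballI allI)
    show "inv_into S \<phi> x \<in> S" if "x \<in> T" for x using iS that .
    fix x y assume xy: "x \<in> T" "y \<in> T"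
    have "\<phi> (inv_into S \<phi> x + inv_into S \<phi> y) = x + y"
      using shomD(2)[OF h iS[OF xy(1)] iS[OF xy(2)]] fi xy by simp
    then show "inv_into S \<phi> (x + y) = inv_into S \<phi> x + inv_into S \<phi> y"
      using inv_into_f_f[OF inj submodD(2)[OF S iS[OF xy(1)] iS[OF xy(2)]]] by simp
  next
    fix a x assume x: "x \<in> T"
    have "\<phi> (aV a (inv_into S \<phi> x)) = aV a x"
      using shomD(3)[OF h iS[OF x]] fi x by simp
    then show "inv_into S \<phi> (aV a x) = aV a (inv_into S \<phi> x)"
      using inv_into_f_f[OF inj submodD(3)[OF S iS[OF x], where a=a]] by simp
  qed
  show "bij_betw (inv_into S \<phi>) T S" by (rule bij_betw_inv_into[OF b])
qed

definition siso :: "'v set \<Rightarrow> 'v set \<Rightarrow> bool" where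
  "siso S T \<longleftrightarrow> (\<exists>\<phi>. shom S T \<phi> \<and> bij_betw \<phi> S T)"

lemma siso_refl: "siso S S"
  unfolding siso_def by (intro exI[of _ "\<lambda>x. x"] conjI shom_id) (simp add: bij_betw_def)

lemma siso_sym: "submod S \<Longrightarrow> siso S T \<Longrightarrow> siso T S"
  unfolding siso_def using shom_inv by blast

lemma siso_trans: assumes "siso S T" "siso T U" shows "siso S U"
proof -
  obtain \<phi> where p: "shom S T \<phi>" "bij_betw \<phi> S T" using assms(1) unfolding siso_def by blast
  obtain \<psi> where q: "shom T U \<psi>" "bij_betw \<psi> T U" using assms(2) unfolding siso_def by blast
  have "bij_betw (\<psi> \<circ> \<phi>) S U" by (rule bij_betw_trans[OF p(2) q(2)])
  then have "bij_betw (\<lambda>x. \<psi> (\<phi> x)) S U" by (simp add: comp_def)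
  then show ?thesis unfolding siso_def using shom_comp[OF p(1) q(1)] by blast
qed

lemma shom_image_submod:
  assumes S: "submod S" and h: "shom S T \<phi>" shows "submod (\<phi> ` S)"
  unfolding submod_def
proof (intro conjI ballI allI)
  show "0 \<in> \<phi> ` S" using shom_zero[OF S h] submodD(1)[OF S] by (metis image_eqI)
  fix x y assume "x \<in> \<phi> ` S" "y \<in> \<phi> ` S"
  then obtain u v where uv: "u \<in> S" "v \<in> S" "x = \<phi> u" "y = \<phi> v" by blast
  have "x + y = \<phi> (u + v)" using shomD(2)[OF h uv(1,2)] uv by simp
  then show "x + y \<in> \<phi> ` S" using submodD(2)[OF S uv(1,2)] by blast
next
  fix a x assume "x \<in> \<phi> ` S"
  then obtain u where u: "u \<in> S" "x = \<phi> u" by blast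
  have "aV a x = \<phi> (aV a u)" using shomD(3)[OF h u(1)] u by simp
  then show "aV a x \<in> \<phi> ` S" using submodD(3)[OF S u(1)] by blast
qed

lemma siso_image:
  assumes "shom S T \<phi>" "inj_on \<phi> S" "S' \<subseteq> S" shows "siso S' (\<phi> ` S')"
proof -
  have "shom S' (\<phi> ` S') \<phi>" using assms(1,3) unfolding shom_def by blast
  moreover have "bij_betw \<phi> S' (\<phi> ` S')" using inj_on_subset[OF assms(2,3)] by (simp add: bij_betw_def)
  ultimately show ?thesis unfolding siso_def by blast
qed

text \<open>Internal direct sums\<close>

definition dsum :: "'v set \<Rightarrow> 'v set \<Rightarrow> 'v set \<Rightarrow> bool" where
  "dsum A B W \<longleftrightarrow> submod A \<and> submod B \<and> A \<inter> B = {0} \<and> W = {a + b |a b. a \<in> A \<and> b \<in> B}"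

lemma dsumD:
  assumes "dsum A B W"
  shows "submod A" "submod B" "A \<inter> B = {0}" "W = {a + b |a b. a \<in> A \<and> b \<in> B}"
  using assms unfolding dsum_def by auto

lemma dsum_comm: "dsum A B W \<Longrightarrow> dsum B A W"
proof -
  have e: "{a + b |a b. a \<in> A \<and> b \<in> B} = {a + b |a b. a \<in> B \<and> b \<in> A}"
  proof (intro set_eqI iffI)
    fix x assume "x \<in> {a + b |a b. a \<in> A \<and> b \<in> B}"
    then obtain a b where "x = a + b" "a \<in> A" "b \<in> B" by blast
    then have "x = b + a" "b \<in> B" "a \<in> A" by (simp_all add: add.commute)
    then show "x \<in> {a + b |a b. a \<in> B \<and> b \<in> A}" by blast
  next
    fix x assume "x \<in> {a + b |a b. a \<in> B \<and> b \<in> A}"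
    then obtain a b where "x = a + b" "a \<in> B" "b \<in> A" by blast
    then have "x = b + a" "b \<in> A" "a \<in> B" by (simp_all add: add.commute)
    then show "x \<in> {a + b |a b. a \<in> A \<and> b \<in> B}" by blast
  qed
  show "dsum A B W \<Longrightarrow> dsum B A W" unfolding dsum_def e by blast
qed

lemma dsum_sub: assumes "dsum A B W" shows "A \<subseteq> W" "B \<subseteq> W"
proof -
  show "A \<subseteq> W" using dsumD[OF assms] submodD(1)[of B] by force
  show "B \<subseteq> W" using dsumD[OF assms] submodD(1)[of A] by force
qed

lemma dsum_submod:
  assumes "dsum A B W" shows "submod W"
proof -
  note d = dsumD[OF assms]
  show ?thesis unfolding submod_def d(4)
  proof (intro conjI ballI allI)
    show "0 \<in> {a + b |a b. a \<in> A \<and> b \<in> B}" using submodD(1)[OF d(1)] submodD(1)[OF d(2)] by force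
    fix x y assume "x \<in> {a + b |a b. a \<in> A \<and> b \<in> B}" "y \<in> {a + b |a b. a \<in> A \<and> b \<in> B}"
    then obtain a b a' b' where "x = a + b" "y = a' + b'" "a \<in> A" "b \<in> B" "a' \<in> A" "b' \<in> B" by auto
    then show "x + y \<in> {a + b |a b. a \<in> A \<and> b \<in> B}"
      using submodD(2)[OF d(1)] submodD(2)[OF d(2)]
      by (intro CollectI exI[of _ "a + a'"] exI[of _ "b + b'"]) (simp add: algebra_simps)
  next
    fix r x assume "x \<in> {a + b |a b. a \<in> A \<and> b \<in> B}"
    then obtain a b where "x = a + b" "a \<in> A" "b \<in> B" by auto
    then show "aV r x \<in> {a + b |a b. a \<in> A \<and> b \<in> B}"
      using submodD(3)[OF d(1)] submodD(3)[OF d(2)] act_add by blast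
  qed
qed

lemma dsum_unique:
  assumes "dsum A B W" "a \<in> A" "a' \<in> A" "b \<in> B" "b' \<in> B" "a + b = a' + b'"
  shows "a = a'" "b = b'"
proof -
  note d = dsumD[OF assms(1)]
  have "a - a' = b' - b" using assms(6) by (simp add: algebra_simps)
  moreover have "a - a' \<in> A" "b' - b \<in> B" using submodD(5) d assms by auto
  ultimately have "a - a' = 0" using d(3) by (metis IntI singletonD)
  then show "a = a'" by simp
  then show "b = b'" using assms(6) by simp
qed

definition proj :: "'v set \<Rightarrow> 'v set \<Rightarrow> 'v \<Rightarrow> 'v" where
  "proj A B w = (SOME a. a \<in> A \<and> w - a \<in> B)"

lemma proj_eq:
  assumes "dsum A B W" "a \<in> A" "b \<in> B"
  shows "proj A B (a + b) = a"
proof -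
  have ex: "a \<in> A \<and> (a + b) - a \<in> B" using assms by simp
  have "proj A B (a + b) \<in> A \<and> (a + b) - proj A B (a + b) \<in> B"
    unfolding proj_def by (rule someI[of _ a]) (rule ex)
  then obtain a2 b2 where "proj A B (a + b) = a2" "a2 \<in> A" "b2 \<in> B" "a + b = a2 + b2"
    by (metis add.commute diff_add_cancel)
  then show ?thesis using dsum_unique[OF assms(1) assms(2) _ assms(3)] by metis
qed

lemma proj_in:
  assumes "dsum A B W" "w \<in> W"
  shows "proj A B w \<in> A" "w - proj A B w \<in> B" "proj B A w = w - proj A B w"
proof -
  obtain a b where ab: "w = a + b" "a \<in> A" "b \<in> B" using assms dsumD(4) by blast
  show "proj A B w \<in> A" "w - proj A B w \<in> B" using proj_eq[OF assms(1) ab(2,3)] ab by auto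
  show "proj B A w = w - proj A B w"
    using proj_eq[OF dsum_comm[OF assms(1)] ab(3,2)] proj_eq[OF assms(1) ab(2,3)] ab
    by (simp add: add.commute)
qed

lemma proj_shom:
  assumes "dsum A B W" shows "shom W A (proj A B)"
  unfolding shom_def
proof (intro conjI ballI allI)
  note d = dsumD[OF assms]
  show "proj A B x \<in> A" if "x \<in> W" for x using proj_in[OF assms that] by simp
  fix x y assume "x \<in> W" "y \<in> W"
  then obtain a b a' b' where ab: "x = a + b" "y = a' + b'" "a \<in> A" "b \<in> B" "a' \<in> A" "b' \<in> B"
    using d(4) by blast
  have e: "x + y = (a + a') + (b + b')" using ab by (simp add: algebra_simps)
  have pe: "proj A B ((a + a') + (b + b')) = a + a'"
    by (rule proj_eq[OF assms submodD(2)[OF d(1) ab(3) ab(5)] submodD(2)[OF d(2) ab(4) ab(6)]])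
  show "proj A B (x + y) = proj A B x + proj A B y"
    unfolding e pe using proj_eq[OF assms ab(3,4)] proj_eq[OF assms ab(5,6)] ab(1,2) by simp
next
  note d = dsumD[OF assms]
  fix r x assume "x \<in> W"
  then obtain a b where ab: "x = a + b" "a \<in> A" "b \<in> B" using d(4) by blast
  have e: "aV r x = aV r a + aV r b" using ab act_add by simp
  have pe: "proj A B (aV r a + aV r b) = aV r a"
    by (rule proj_eq[OF assms submodD(3)[OF d(1) ab(2)] submodD(3)[OF d(2) ab(3)]])
  show "proj A B (aV r x) = aV r (proj A B x)"
    unfolding e pe using proj_eq[OF assms ab(2,3)] ab(1) by simp
qed

lemma proj_decomp: "dsum A B W \<Longrightarrow> w \<in> W \<Longrightarrow> w = proj A B w + proj B A w"
  using proj_in by simp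

end

context amod begin

lemma compl_iso:
  assumes AX: "dsum A X W" and AY: "dsum A Y W"
  shows "siso X Y"
proof -
  define \<psi> where "\<psi> = proj Y A"
  have YA: "dsum Y A W" by (rule dsum_comm[OF AY])
  have hW: "shom W Y \<psi>" unfolding \<psi>_def by (rule proj_shom[OF YA])
  have XW: "X \<subseteq> W" by (rule dsum_sub(2)[OF AX])
  have h: "shom X Y \<psi>" by (rule shom_mono[OF hW XW order.refl])
  have inj: "inj_on \<psi> X"
  proof (rule inj_onI)
    fix x x' assume x: "x \<in> X" "x' \<in> X" and e: "\<psi> x = \<psi> x'"
    have d1: "x = proj A Y x + \<psi> x" unfolding \<psi>_def by (rule proj_decomp[OF AY]) (use XW x in auto)
    have d2: "x' = proj A Y x' + \<psi> x'" unfolding \<psi>_def by (rule proj_decomp[OF AY]) (use XW x in auto)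
    have "x - x' = proj A Y x - proj A Y x'" using d1 d2 e by (metis add_diff_cancel_right)
    moreover have "proj A Y x - proj A Y x' \<in> A"
      using submodD(5)[OF dsumD(1)[OF AY] proj_in(1)[OF AY] proj_in(1)[OF AY]] XW x by auto
    moreover have "x - x' \<in> X" using submodD(5)[OF dsumD(2)[OF AX] x] .
    ultimately have "x - x' \<in> A \<inter> X" by simp
    then show "x = x'" using dsumD(3)[OF AX] by auto
  qed
  have sur: "Y \<subseteq> \<psi> ` X"
  proof
    fix y assume y: "y \<in> Y"
    then have "y \<in> W" using dsum_sub(2)[OF AY] by auto
    then obtain a x where ax: "y = a + x" "a \<in> A" "x \<in> X" using dsumD(4)[OF AX] by blast
    have "x = y + - a" using ax(1) by (simp add: algebra_simps)
    then have "\<psi> x = y" unfolding \<psi>_def using proj_eq[OF YA y submodD(4)[OF dsumD(1)[OF AX] ax(2)]] by simp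
    then show "y \<in> \<psi> ` X" using ax(3) by blast
  qed
  have "\<psi> ` X = Y" using sur shomD(1)[OF h] by blast
  then show ?thesis unfolding siso_def using h inj by (auto simp: bij_betw_def)
qed

lemma sum_iso:
  assumes d: "dsum A B S" and d': "dsum A' B' S'" and iA: "siso A A'" and iB: "siso B B'"
  shows "siso S S'"
proof -
  obtain \<phi> where p: "shom A A' \<phi>" "bij_betw \<phi> A A'" using iA unfolding siso_def by blast
  obtain \<psi> where q: "shom B B' \<psi>" "bij_betw \<psi> B B'" using iB unfolding siso_def by blast
  have dBA: "dsum B A S" by (rule dsum_comm[OF d])
  define \<chi> where "\<chi> s = \<phi> (proj A B s) + \<psi> (proj B A s)" for s
  note pA = proj_shom[OF d] and pB = proj_shom[OF dBA]
  have inS': "a' + b' \<in> S'" if "a' \<in> A'" "b' \<in> B'" for a' b' using that dsumD(4)[OF d'] by blast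
  have h: "shom S S' \<chi>"
    unfolding shom_def
  proof (intro conjI ballI allI)
    fix x assume x: "x \<in> S"
    show "\<chi> x \<in> S'" unfolding \<chi>_def
      by (rule inS'[OF shomD(1)[OF p(1) shomD(1)[OF pA x]] shomD(1)[OF q(1) shomD(1)[OF pB x]]])
    fix y assume y: "y \<in> S"
    show "\<chi> (x + y) = \<chi> x + \<chi> y" unfolding \<chi>_def shomD(2)[OF pA x y] shomD(2)[OF pB x y]
      shomD(2)[OF p(1) shomD(1)[OF pA x] shomD(1)[OF pA y]] shomD(2)[OF q(1) shomD(1)[OF pB x] shomD(1)[OF pB y]]
      by (simp add: algebra_simps)
  next
    fix a x assume x: "x \<in> S"
    show "\<chi> (aV a x) = aV a (\<chi> x)" unfolding \<chi>_def shomD(3)[OF pA x] shomD(3)[OF pB x]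
      shomD(3)[OF p(1) shomD(1)[OF pA x]] shomD(3)[OF q(1) shomD(1)[OF pB x]] act_add ..
  qed
  have injp: "inj_on \<phi> A" and injq: "inj_on \<psi> B" using p(2) q(2) by (auto simp: bij_betw_def)
  have inj: "inj_on \<chi> S"
  proof (rule inj_onI)
    fix x y assume x: "x \<in> S" and y: "y \<in> S" and e: "\<chi> x = \<chi> y"
    have u: "\<phi> (proj A B x) = \<phi> (proj A B y)" "\<psi> (proj B A x) = \<psi> (proj B A y)"
      using dsum_unique[OF d' shomD(1)[OF p(1) shomD(1)[OF pA x]] shomD(1)[OF p(1) shomD(1)[OF pA y]]
          shomD(1)[OF q(1) shomD(1)[OF pB x]] shomD(1)[OF q(1) shomD(1)[OF pB y]]] e
      unfolding \<chi>_def by auto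
    have "proj A B x = proj A B y" using injp u(1) shomD(1)[OF pA x] shomD(1)[OF pA y] by (auto dest: inj_onD)
    moreover have "proj B A x = proj B A y" using injq u(2) shomD(1)[OF pB x] shomD(1)[OF pB y] by (auto dest: inj_onD)
    ultimately show "x = y" using proj_decomp[OF d x] proj_decomp[OF d y] by simp
  qed
  have sur: "S' \<subseteq> \<chi> ` S"
  proof
    fix s' assume "s' \<in> S'"
    then obtain a' b' where ab: "s' = a' + b'" "a' \<in> A'" "b' \<in> B'" using dsumD(4)[OF d'] by blast
    obtain a where a: "a \<in> A" "a' = \<phi> a" using ab(2) p(2) unfolding bij_betw_def by blast
    obtain b where b: "b \<in> B" "b' = \<psi> b" using ab(3) q(2) unfolding bij_betw_def by blast
    have s: "a + b \<in> S" using dsumD(4)[OF d] a b by blast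
    have "proj A B (a + b) = a" by (rule proj_eq[OF d a(1) b(1)])
    moreover have "proj B A (a + b) = b" using proj_eq[OF dBA b(1) a(1)] by (simp add: add.commute)
    ultimately have "\<chi> (a + b) = s'" unfolding \<chi>_def using ab a b by simp
    then show "s' \<in> \<chi> ` S" using s by blast
  qed
  have "\<chi> ` S = S'" using sur shomD(1)[OF h] by blast
  then show ?thesis unfolding siso_def using h inj by (auto simp: bij_betw_def)
qed

lemma dsum_image:
  assumes W: "submod W" and h: "shom W W' \<phi>" and b: "bij_betw \<phi> W W'" and d: "dsum A B W"
  shows "dsum (\<phi> ` A) (\<phi> ` B) W'"
proof -
  note dd = dsumD[OF d]
  have AW: "A \<subseteq> W" and BW: "B \<subseteq> W" using dsum_sub[OF d] by auto
  have inj: "inj_on \<phi> W" and im: "\<phi> ` W = W'" using b by (auto simp: bij_betw_def)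
  have z: "\<phi> 0 = 0" by (rule shom_zero[OF W h])
  have sA: "submod (\<phi> ` A)" by (rule shom_image_submod[OF dd(1) shom_mono[OF h AW order.refl]])
  have sB: "submod (\<phi> ` B)" by (rule shom_image_submod[OF dd(2) shom_mono[OF h BW order.refl]])
  have int: "\<phi> ` A \<inter> \<phi> ` B = {0}"
  proof
    show "{0} \<subseteq> \<phi> ` A \<inter> \<phi> ` B" using z submodD(1)[OF dd(1)] submodD(1)[OF dd(2)] by (metis Int_iff image_eqI singletonD subsetI)
    show "\<phi> ` A \<inter> \<phi> ` B \<subseteq> {0}"
    proof
      fix y assume "y \<in> \<phi> ` A \<inter> \<phi> ` B"
      then obtain a b where ab: "a \<in> A" "b \<in> B" "y = \<phi> a" "y = \<phi> b" by blast
      then have "a = b" using inj AW BW by (metis inj_onD subsetD)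
      then have "a = 0" using ab dd(3) by blast
      then show "y \<in> {0}" using ab z by simp
    qed
  qed
  have sum: "W' = {a + b |a b. a \<in> \<phi> ` A \<and> b \<in> \<phi> ` B}"
  proof (intro set_eqI iffI)
    fix w' assume "w' \<in> W'"
    then obtain w where w: "w \<in> W" "w' = \<phi> w" using im by blast
    then obtain a b where ab: "w = a + b" "a \<in> A" "b \<in> B" using dd(4) by blast
    have "w' = \<phi> a + \<phi> b" using w ab shomD(2)[OF h] AW BW by auto
    then show "w' \<in> {a + b |a b. a \<in> \<phi> ` A \<and> b \<in> \<phi> ` B}" using ab by blast
  next
    fix w' assume "w' \<in> {a + b |a b. a \<in> \<phi> ` A \<and> b \<in> \<phi> ` B}"
    then obtain a b where ab: "w' = \<phi> a + \<phi> b" "a \<in> A" "b \<in> B" by blast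
    have "a + b \<in> W" using dd(4) ab by blast
    moreover have "\<phi> (a + b) = \<phi> a + \<phi> b" by (rule shomD(2)[OF h]) (use ab AW BW in auto)
    then have "w' = \<phi> (a + b)" using ab by simp
    ultimately show "w' \<in> W'" using im by blast
  qed
  show ?thesis unfolding dsum_def using sA sB int sum by blast
qed

lemma sdim_le: "S \<subseteq> T \<Longrightarrow> vs.dim S \<le> vs.dim T"
  using vs.fd_dim_mono fdF by metis

lemma sdim_less: "submod S \<Longrightarrow> submod T \<Longrightarrow> S \<subset> T \<Longrightarrow> vs.dim S < vs.dim T"
  using vs.fd_dim_less fdF submod_subspace by metis

lemma shom_linext:
  assumes "submod S" "shom S T \<phi>"
  shows "\<exists>g. Vector_Spaces.linear sV sV g \<and> (\<forall>x\<in>S. g x = \<phi> x)"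
  by (rule vs.ext_linear_on[OF submod_subspace[OF assms(1)]])
    (auto intro: shomD(2)[OF assms(2)] shom_scale[OF assms(2)])

lemma shom_inj_dim:
  assumes S: "submod S" and h: "shom S T \<phi>" and inj: "inj_on \<phi> S"
  shows "vs.dim (\<phi> ` S) = vs.dim S"
proof -
  interpret P: vector_space_pair sV sV by unfold_locales
  obtain g where g: "Vector_Spaces.linear sV sV g" "\<forall>x\<in>S. g x = \<phi> x" using shom_linext[OF S h] by blast
  obtain F where F: "finite F" "S \<subseteq> vs.span F" using fdF by metis
  have im: "g ` S = \<phi> ` S" using g(2) by (auto simp: image_def)
  have "inj_on g S" using inj g(2) by (simp add: inj_on_def)
  then show ?thesis using P.dim_inj_image[OF g(1) F(1) F(2) submod_subspace[OF S]] im by simp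
qed

lemma siso_dim: "submod S \<Longrightarrow> siso S T \<Longrightarrow> vs.dim S = vs.dim T"
  unfolding siso_def bij_betw_def using shom_inj_dim by metis

end

context amod begin

definition indecomp :: "'v set \<Rightarrow> bool" where
  "indecomp M \<longleftrightarrow> (\<forall>A B. dsum A B M \<longrightarrow> A = {0} \<or> B = {0})"

lemma shom_pow: "shom M M \<theta> \<Longrightarrow> shom M M (\<theta> ^^ n)"
proof (induction n)
  case 0 then show ?case by (simp add: shom_id[unfolded id_def] id_def)
next
  case (Suc n)
  have "shom M M (\<lambda>x. \<theta> ((\<theta> ^^ n) x))" by (rule shom_comp[OF Suc.IH[OF Suc.prems] Suc.prems])
  then show ?case by (simp add: comp_def)
qed

lemma kernel_submod:
  assumes "submod M" "shom M T \<phi>" "submod T"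
  shows "submod {m \<in> M. \<phi> m = 0}"
  unfolding submod_def
proof (intro conjI ballI allI)
  show "0 \<in> {m \<in> M. \<phi> m = 0}" using submodD(1)[OF assms(1)] shom_zero[OF assms(1,2)] by simp
  fix x y assume "x \<in> {m \<in> M. \<phi> m = 0}" "y \<in> {m \<in> M. \<phi> m = 0}"
  then show "x + y \<in> {m \<in> M. \<phi> m = 0}" using shomD(2)[OF assms(2)] submodD(2)[OF assms(1)] by simp
next
  fix a x assume "x \<in> {m \<in> M. \<phi> m = 0}"
  then show "aV a x \<in> {m \<in> M. \<phi> m = 0}" using shomD(3)[OF assms(2)] submodD(3)[OF assms(1)] act_zero by simp
qed

lemma inj_imp_bij:
  assumes M: "submod M" and h: "shom M M \<theta>" and inj: "inj_on \<theta> M"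
  shows "bij_betw \<theta> M M"
proof -
  have sub: "\<theta> ` M \<subseteq> M" using shomD(1)[OF h] by blast
  have d: "vs.dim (\<theta> ` M) = vs.dim M" by (rule shom_inj_dim[OF M h inj])
  obtain F where F: "finite F" "M \<subseteq> vs.span F" using fdF by metis
  have "\<theta> ` M = M"
    by (rule vs.fd_subspace_eq[OF F submod_subspace[OF M] submod_subspace[OF shom_image_submod[OF M h]] sub])
      (simp add: d)
  then show ?thesis using inj by (simp add: bij_betw_def)
qed

lemma rank_nullity_shom:
  assumes M: "submod M" and h: "shom M T \<phi>"
  shows "vs.dim M = vs.dim {m \<in> M. \<phi> m = 0} + vs.dim (\<phi> ` M)"
proof -
  interpret P: vector_space_pair sV sV by unfold_locales
  obtain g where g: "Vector_Spaces.linear sV sV g" "\<forall>x\<in>M. g x = \<phi> x" using shom_linext[OF M h] by blast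
  obtain F where F: "finite F" "M \<subseteq> vs.span F" using fdF by metis
  have e1: "M \<inter> {x. g x = 0} = {m \<in> M. \<phi> m = 0}" using g(2) by auto
  have e2: "g ` M = \<phi> ` M" using g(2) by (auto simp: image_def)
  show ?thesis using P.rank_nullity[OF g(1) F submod_subspace[OF M]] unfolding e1 e2 .
qed

lemma fitting:
  assumes M: "submod M" and h: "shom M M \<theta>" and ind: "indecomp M"
  shows "bij_betw \<theta> M M \<or> (\<exists>n. \<forall>m\<in>M. (\<theta> ^^ n) m = 0)"
proof -
  define K where "K k = {m \<in> M. (\<theta> ^^ k) m = 0}" for k
  define I where "I k = (\<theta> ^^ k) ` M" for k
  have hp: "shom M M (\<theta> ^^ k)" for k by (rule shom_pow[OF h])
  have sK: "submod (K k)" for k unfolding K_def by (rule kernel_submod[OF M hp M])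
  have sI: "submod (I k)" for k unfolding I_def by (rule shom_image_submod[OF M hp])
  have rn: "vs.dim M = vs.dim (K k) + vs.dim (I k)" for k
    unfolding K_def I_def by (rule rank_nullity_shom[OF M hp])
  have IM: "I k \<subseteq> M" for k unfolding I_def using shomD(1)[OF hp] by blast
  have KM: "K k \<subseteq> M" for k unfolding K_def by blast
  have powadd: "(\<theta> ^^ (i + j)) m = (\<theta> ^^ i) ((\<theta> ^^ j) m)" for i j m by (simp add: funpow_add)
  have Imono: "I j \<subseteq> I k" if "k \<le> j" for j k
  proof
    fix x assume "x \<in> I j"
    then obtain m where m: "m \<in> M" "x = (\<theta> ^^ j) m" unfolding I_def by blast
    have "x = (\<theta> ^^ k) ((\<theta> ^^ (j - k)) m)" using m(2) powadd[of k "j - k" m] that by simp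
    moreover have "(\<theta> ^^ (j - k)) m \<in> M" using shomD(1)[OF hp m(1)] .
    ultimately show "x \<in> I k" unfolding I_def by blast
  qed
  have Kmono: "K k \<subseteq> K j" if "k \<le> j" for j k
  proof
    fix x assume "x \<in> K k"
    then have x: "x \<in> M" "(\<theta> ^^ k) x = 0" unfolding K_def by auto
    have "(\<theta> ^^ j) x = (\<theta> ^^ (j - k)) ((\<theta> ^^ k) x)" using powadd[of "j - k" k x] that by simp
    also have "\<dots> = 0" using x(2) shom_zero[OF M hp] by simp
    finally show "x \<in> K j" using x(1) unfolding K_def by blast
  qed
  obtain F where F: "finite F" "M \<subseteq> vs.span F" using fdF by metis
  obtain n where n: "\<forall>j. vs.dim (I n) \<le> vs.dim (I j)"
    using ex_has_least_nat[of "\<lambda>j. True" 0 "\<lambda>j. vs.dim (I j)"] by blast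
  have Istab: "I j = I n" if "n \<le> j" for j
  proof -
    have "I n \<subseteq> vs.span F" using IM F(2) by blast
    moreover have "vs.dim (I n) \<le> vs.dim (I j)" using n by blast
    ultimately show ?thesis
      using vs.fd_subspace_eq[OF F(1) _ submod_subspace[OF sI] submod_subspace[OF sI] Imono[OF that]] by blast
  qed
  define N where "N = Suc n"
  have IN1: "I N = I n" by (rule Istab) (simp add: N_def)
  have IN2: "I (N + N) = I n" by (rule Istab) (simp add: N_def)
  have KN: "K (N + N) = K N"
  proof -
    have "vs.dim (K (N + N)) = vs.dim (K N)" using rn[of N, unfolded IN1] rn[of "N + N", unfolded IN2] by linarith
    moreover have "K (N + N) \<subseteq> vs.span F" using KM F(2) by blast
    moreover have "K N \<subseteq> K (N + N)" by (rule Kmono) simp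
    ultimately show ?thesis
      using vs.fd_subspace_eq[OF F(1) _ submod_subspace[OF sK] submod_subspace[OF sK]] by (metis order.refl)
  qed
  have IN: "I N = I n" "I (N + N) = I n" using IN1 IN2 by auto
  have INN: "I (N + N) = I N" using IN by simp
  have dec: "dsum (K N) (I N) M"
    unfolding dsum_def
  proof (intro conjI)
    show "submod (K N)" "submod (I N)" by (rule sK, rule sI)
    show "K N \<inter> I N = {0}"
    proof
      show "{0} \<subseteq> K N \<inter> I N" using submodD(1)[OF sK] submodD(1)[OF sI] by blast
      show "K N \<inter> I N \<subseteq> {0}"
      proof
        fix x assume x: "x \<in> K N \<inter> I N"
        then obtain y where y: "y \<in> M" "x = (\<theta> ^^ N) y" unfolding I_def by blast
        have "(\<theta> ^^ (N + N)) y = 0" using x y powadd[of N N y] unfolding K_def by simp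
        then have "y \<in> K (N + N)" using y(1) unfolding K_def by blast
        then have "y \<in> K N" using KN by simp
        then show "x \<in> {0}" using y unfolding K_def by simp
      qed
    qed
    show "M = {a + b |a b. a \<in> K N \<and> b \<in> I N}"
    proof (intro set_eqI iffI)
      fix m assume m: "m \<in> M"
      have "(\<theta> ^^ N) m \<in> I (N + N)" using m INN unfolding I_def by blast
      then obtain y where y: "y \<in> M" "(\<theta> ^^ N) m = (\<theta> ^^ (N + N)) y" unfolding I_def by blast
      define z where "z = (\<theta> ^^ N) y"
      have zI: "z \<in> I N" unfolding z_def I_def using y(1) by blast
      have zM: "z \<in> M" using zI IM by blast
      have "(\<theta> ^^ N) (m - z) = (\<theta> ^^ N) m - (\<theta> ^^ N) z" by (rule shom_diff[OF M hp m zM])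
      also have "\<dots> = 0" using y(2) powadd[of N N y] unfolding z_def by simp
      finally have "m - z \<in> K N" unfolding K_def using submodD(5)[OF M m zM] by blast
      moreover have "m = (m - z) + z" by simp
      ultimately show "m \<in> {a + b |a b. a \<in> K N \<and> b \<in> I N}" using zI by blast
    next
      fix m assume "m \<in> {a + b |a b. a \<in> K N \<and> b \<in> I N}"
      then obtain a b where "m = a + b" "a \<in> K N" "b \<in> I N" by blast
      then show "m \<in> M" using KM IM submodD(2)[OF M] by blast
    qed
  qed
  have "K N = {0} \<or> I N = {0}" using ind dec unfolding indecomp_def by blast
  then show ?thesis
  proof
    assume K0: "K N = {0}"
    have injN: "inj_on (\<theta> ^^ N) M"
    proof (rule inj_onI)
      fix x y assume xy: "x \<in> M" "y \<in> M" "(\<theta> ^^ N) x = (\<theta> ^^ N) y"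
      have "(\<theta> ^^ N) (x - y) = 0" using shom_diff[OF M hp xy(1,2)] xy(3) by simp
      then have "x - y \<in> K N" unfolding K_def using submodD(5)[OF M xy(1,2)] by blast
      then show "x = y" using K0 by simp
    qed
    have "inj_on \<theta> M"
    proof (rule inj_onI)
      fix x y assume xy: "x \<in> M" "y \<in> M" "\<theta> x = \<theta> y"
      have "(\<theta> ^^ N) x = (\<theta> ^^ n) (\<theta> x)" "(\<theta> ^^ N) y = (\<theta> ^^ n) (\<theta> y)"
        unfolding N_def by (simp_all add: funpow_swap1)
      then have "(\<theta> ^^ N) x = (\<theta> ^^ N) y" using xy(3) by simp
      then show "x = y" using inj_onD[OF injN _ xy(1,2)] by blast
    qed
    then show ?thesis using inj_imp_bij[OF M h] by blast
  next
    assume "I N = {0}"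
    then have "\<forall>m\<in>M. (\<theta> ^^ N) m = 0" unfolding I_def by auto
    then show ?thesis by blast
  qed
qed

lemma shom_minus:
  assumes M: "submod M" and h: "shom M T \<phi>" and k: "shom M T \<psi>" and T: "submod T"
  shows "shom M T (\<lambda>m. \<phi> m - \<psi> m)"
  unfolding shom_def
proof (intro conjI ballI allI)
  show "\<phi> x - \<psi> x \<in> T" if "x \<in> M" for x using submodD(5)[OF T shomD(1)[OF h that] shomD(1)[OF k that]] .
  show "\<phi> (x + y) - \<psi> (x + y) = \<phi> x - \<psi> x + (\<phi> y - \<psi> y)" if "x \<in> M" "y \<in> M" for x y
    using shomD(2)[OF h that] shomD(2)[OF k that] by (simp add: algebra_simps)
  show "\<phi> (aV a x) - \<psi> (aV a x) = aV a (\<phi> x - \<psi> x)" if "x \<in> M" for a x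
    using shomD(3)[OF h that] shomD(3)[OF k that] act_diff by simp
qed

lemma nilp_bij:
  assumes M: "submod M" and h: "shom M M \<theta>" and nil: "\<forall>m\<in>M. (\<theta> ^^ n) m = 0"
  shows "bij_betw (\<lambda>m. m - \<theta> m) M M" "shom M M (\<lambda>m. m - \<theta> m)"
proof -
  show hi: "shom M M (\<lambda>m. m - \<theta> m)" by (rule shom_minus[OF M shom_id h M])
  have fix0: "m = 0" if "m \<in> M" "m - \<theta> m = 0" for m
  proof -
    have t: "\<theta> m = m" using that(2) by simp
    have "(\<theta> ^^ k) m = m" for k by (induction k) (simp_all add: t)
    then show ?thesis using nil that(1) by metis
  qed
  have "inj_on (\<lambda>m. m - \<theta> m) M"
  proof (rule inj_onI)
    fix x y assume xy: "x \<in> M" "y \<in> M" "x - \<theta> x = y - \<theta> y"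
    have "(x - y) - \<theta> (x - y) = (x - \<theta> x) - (y - \<theta> y)"
      using shom_diff[OF M h xy(1,2)] by (simp add: algebra_simps)
    also have "\<dots> = 0" using xy(3) by simp
    finally have "(x - y) - \<theta> (x - y) = 0" .
    then have "x - y = 0" using fix0 submodD(5)[OF M xy(1,2)] by blast
    then show "x = y" by simp
  qed
  then show "bij_betw (\<lambda>m. m - \<theta> m) M M" by (rule inj_imp_bij[OF M hi])
qed

end

context amod begin

lemma dsumI:
  assumes "submod A" "submod B" "\<And>x. x \<in> A \<Longrightarrow> x \<in> B \<Longrightarrow> x = 0"
    "\<And>w. w \<in> W \<Longrightarrow> \<exists>a\<in>A. \<exists>b\<in>B. w = a + b" "\<And>a b. a \<in> A \<Longrightarrow> b \<in> B \<Longrightarrow> a + b \<in> W"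
  shows "dsum A B W"
proof -
  have "A \<inter> B = {0}" using assms(3) submodD(1)[OF assms(1)] submodD(1)[OF assms(2)] by blast
  moreover have "W = {a + b |a b. a \<in> A \<and> b \<in> B}" using assms(4,5) by blast
  ultimately show ?thesis unfolding dsum_def using assms(1,2) by blast
qed

lemma proj_of_A: "dsum A B W \<Longrightarrow> a \<in> A \<Longrightarrow> proj A B a = a"
  using proj_eq[of A B W a 0] submodD(1)[OF dsumD(2)] by simp

lemma proj_of_B: "dsum A B W \<Longrightarrow> b \<in> B \<Longrightarrow> proj A B b = 0"
  using proj_eq[of A B W 0 b] submodD(1)[OF dsumD(1)] by simp

lemma proj_zero_in: "dsum A B W \<Longrightarrow> w \<in> W \<Longrightarrow> proj A B w = 0 \<Longrightarrow> w \<in> B"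
  using proj_in(2)[of A B W w] by simp

lemma dsum_split:
  assumes d: "dsum M X W" and d': "dsum M' M'' M"
  shows "dsum M'' X {a + b |a b. a \<in> M'' \<and> b \<in> X}" "dsum M' {a + b |a b. a \<in> M'' \<and> b \<in> X} W"
proof -
  note dd = dsumD[OF d] and dd' = dsumD[OF d']
  have M'M: "M' \<subseteq> M" and M''M: "M'' \<subseteq> M" using dsum_sub[OF d'] by auto
  show d2: "dsum M'' X {a + b |a b. a \<in> M'' \<and> b \<in> X}"
    by (rule dsumI[OF dd'(2) dd(2)]) (use dd(3) M''M in auto)
  have sM: "submod M" using dsum_submod[OF d'] .
  show "dsum M' {a + b |a b. a \<in> M'' \<and> b \<in> X} W"
  proof (rule dsumI[OF dd'(1) dsum_submod[OF d2]])
    fix x assume x: "x \<in> M'" "x \<in> {a + b |a b. a \<in> M'' \<and> b \<in> X}"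
    then obtain a b where ab: "x = a + b" "a \<in> M''" "b \<in> X" by blast
    have "x - a \<in> M" using submodD(5)[OF sM] x(1) ab(2) M'M M''M by blast
    moreover have "x - a = b" using ab(1) by simp
    ultimately have "b = 0" using dd(3) ab(3) by blast
    then have "x \<in> M' \<inter> M''" using x ab by simp
    then show "x = 0" using dd'(3) by blast
  next
    fix w assume "w \<in> W"
    then obtain m x where mx: "w = m + x" "m \<in> M" "x \<in> X" using dd(4) by blast
    then obtain m' m'' where mm: "m = m' + m''" "m' \<in> M'" "m'' \<in> M''" using dd'(4) by blast
    have "w = m' + (m'' + x)" using mx mm by (simp add: add.assoc)
    then show "\<exists>a\<in>M'. \<exists>b\<in>{a + b |a b. a \<in> M'' \<and> b \<in> X}. w = a + b" using mm mx by blast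
  next
    fix a b assume ab: "a \<in> M'" "b \<in> {a + b |a b. a \<in> M'' \<and> b \<in> X}"
    then obtain m'' x where mx: "b = m'' + x" "m'' \<in> M''" "x \<in> X" by blast
    have "a + b = (a + m'') + x" using mx by (simp add: add.assoc)
    moreover have "a + m'' \<in> M" using dd'(4) ab(1) mx(2) by blast
    ultimately show "a + b \<in> W" using dd(4) mx(3) by blast
  qed
qed

lemma proj_compl:
  assumes d: "dsum M X W" and h: "shom M W \<rho>" and b: "bij_betw (\<lambda>m. proj M X (\<rho> m)) M M"
  shows "dsum (\<rho> ` M) X W" "inj_on \<rho> M"
proof -
  note dd = dsumD[OF d]
  have W: "submod W" by (rule dsum_submod[OF d])
  have hp: "shom W M (proj M X)" by (rule proj_shom[OF d])
  have injc: "inj_on (\<lambda>m. proj M X (\<rho> m)) M" using b by (simp add: bij_betw_def)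
  show inj: "inj_on \<rho> M"
    using injc by (auto simp: inj_on_def)
  have z: "\<rho> 0 = 0" by (rule shom_zero[OF dd(1) h])
  show "dsum (\<rho> ` M) X W"
  proof (rule dsumI[OF shom_image_submod[OF dd(1) h] dd(2)])
    fix x assume x: "x \<in> \<rho> ` M" "x \<in> X"
    then obtain m where m: "m \<in> M" "x = \<rho> m" by blast
    have "proj M X (\<rho> m) = 0" using proj_of_B[OF d x(2)] m by simp
    also have "\<dots> = proj M X (\<rho> 0)" using z proj_of_B[OF d submodD(1)[OF dd(2)]] by simp
    finally have "m = 0" using inj_onD[OF injc _ m(1) submodD(1)[OF dd(1)]] by blast
    then show "x = 0" using m z by simp
  next
    fix w assume w: "w \<in> W"
    have "proj M X w \<in> M" using proj_in(1)[OF d w] .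
    then obtain m0 where m0: "m0 \<in> M" "proj M X w = proj M X (\<rho> m0)" using b unfolding bij_betw_def by force
    have rw: "\<rho> m0 \<in> W" using shomD(1)[OF h m0(1)] .
    have "proj M X (w - \<rho> m0) = proj M X w - proj M X (\<rho> m0)" by (rule shom_diff[OF W hp w rw])
    then have "proj M X (w - \<rho> m0) = 0" using m0(2) by simp
    then have "w - \<rho> m0 \<in> X" using proj_zero_in[OF d submodD(5)[OF W w rw]] by blast
    moreover have "w = \<rho> m0 + (w - \<rho> m0)" by simp
    ultimately show "\<exists>a\<in>\<rho> ` M. \<exists>b\<in>X. w = a + b" using m0(1) by blast
  next
    fix a b assume "a \<in> \<rho> ` M" "b \<in> X"
    then show "a + b \<in> W" using shomD(1)[OF h] dsum_sub(2)[OF d] submodD(2)[OF W] by blast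
  qed
qed

lemma cancel_main:
  "dsum M X W \<Longrightarrow> dsum N Y W \<Longrightarrow> siso M N \<Longrightarrow> siso X Y"
proof (induction "vs.dim W + vs.dim M" arbitrary: W M X N Y rule: less_induct)
  case less
  note dMX = less.prems(1) and dNY = less.prems(2)
  obtain \<alpha> where \<alpha>: "shom M N \<alpha>" "bij_betw \<alpha> M N" using less.prems(3) unfolding siso_def by blast
  have sM: "submod M" and sX: "submod X" and sN: "submod N" and sY: "submod Y"
    using dsumD[OF dMX] dsumD[OF dNY] by auto
  have sW: "submod W" by (rule dsum_submod[OF dMX])
  have MW: "M \<subseteq> W" and XW: "X \<subseteq> W" and NW: "N \<subseteq> W" and YW: "Y \<subseteq> W"
    using dsum_sub[OF dMX] dsum_sub[OF dNY] by auto
  have inj\<alpha>: "inj_on \<alpha> M" and im\<alpha>: "\<alpha> ` M = N" using \<alpha>(2) by (auto simp: bij_betw_def)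
  show ?case
  proof (cases "M = {0}")
    case True
    have "N = {0}" using im\<alpha> True shom_zero[OF sM \<alpha>(1)] by simp
    have "X = W" using dsumD(4)[OF dMX] True by auto
    moreover have "Y = W" using dsumD(4)[OF dNY] \<open>N = {0}\<close> by auto
    ultimately show ?thesis using siso_refl by simp
  next
    case M0: False
    show ?thesis
    proof (cases "\<exists>M' M''. dsum M' M'' M \<and> M' \<noteq> {0} \<and> M'' \<noteq> {0}")
      case True
      then obtain M' M'' where dM: "dsum M' M'' M" and M'0: "M' \<noteq> {0}" and M''0: "M'' \<noteq> {0}" by blast
      have sM': "submod M'" and sM'': "submod M''" using dsumD[OF dM] by auto
      have M'M: "M' \<subseteq> M" and M''M: "M'' \<subseteq> M" using dsum_sub[OF dM] by auto
      define W2 where "W2 = {a + b |a b. a \<in> M'' \<and> b \<in> X}"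
      have d2: "dsum M'' X W2" and d3: "dsum M' W2 W" unfolding W2_def by (rule dsum_split[OF dMX dM])+
      define N' where "N' = \<alpha> ` M'"
      define N'' where "N'' = \<alpha> ` M''"
      have dN: "dsum N' N'' N" unfolding N'_def N''_def by (rule dsum_image[OF sM \<alpha>(1) \<alpha>(2) dM])
      define Y2 where "Y2 = {a + b |a b. a \<in> N'' \<and> b \<in> Y}"
      have d2': "dsum N'' Y Y2" and d3': "dsum N' Y2 W" unfolding Y2_def by (rule dsum_split[OF dNY dN])+
      have i1: "siso M' N'" unfolding N'_def by (rule siso_image[OF \<alpha>(1) inj\<alpha> M'M])
      have "M' \<subset> M"
      proof -
        obtain z where z: "z \<in> M''" "z \<noteq> 0" using M''0 submodD(1)[OF sM''] by blast
        have "z \<notin> M'" using z dsumD(3)[OF dM] by blast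
        then show ?thesis using M'M M''M z by blast
      qed
      then have lt1: "vs.dim M' < vs.dim M" by (rule sdim_less[OF sM' sM])
      have "siso W2 Y2" by (rule less.hyps[OF _ d3 d3' i1]) (use lt1 in simp)
      then obtain \<beta> where \<beta>: "shom W2 Y2 \<beta>" "bij_betw \<beta> W2 Y2" unfolding siso_def by blast
      have sW2: "submod W2" by (rule dsum_submod[OF d2])
      have sY2: "submod Y2" by (rule dsum_submod[OF d2'])
      define \<beta>' where "\<beta>' = inv_into W2 \<beta>"
      have \<beta>': "shom Y2 W2 \<beta>'" "bij_betw \<beta>' Y2 W2" unfolding \<beta>'_def by (rule shom_inv[OF sW2 \<beta>])+
      have d4: "dsum (\<beta>' ` N'') (\<beta>' ` Y) W2" by (rule dsum_image[OF sY2 \<beta>'(1) \<beta>'(2) d2'])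
      have inj\<beta>': "inj_on \<beta>' Y2" using \<beta>'(2) by (simp add: bij_betw_def)
      have N''Y2: "N'' \<subseteq> Y2" and YY2: "Y \<subseteq> Y2" using dsum_sub[OF d2'] by auto
      have "siso M'' N''" unfolding N''_def by (rule siso_image[OF \<alpha>(1) inj\<alpha> M''M])
      then have i2: "siso M'' (\<beta>' ` N'')"
        using siso_trans siso_image[OF \<beta>'(1) inj\<beta>' N''Y2] by blast
      have "W2 \<subset> W"
      proof -
        obtain z where z: "z \<in> M'" "z \<noteq> 0" using M'0 submodD(1)[OF sM'] by blast
        have "z \<notin> W2" using z dsumD(3)[OF d3] by blast
        then show ?thesis using dsum_sub[OF d3] z by blast
      qed
      then have lt2: "vs.dim W2 < vs.dim W" by (rule sdim_less[OF sW2 sW])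
      have le2: "vs.dim M'' \<le> vs.dim M" by (rule sdim_le[OF M''M])
      have "siso X (\<beta>' ` Y)" by (rule less.hyps[OF _ d2 d4 i2]) (use lt2 le2 in simp)
      moreover have "siso (\<beta>' ` Y) Y"
        by (rule siso_sym[OF sY siso_image[OF \<beta>'(1) inj\<beta>' YY2]])
      ultimately show ?thesis by (rule siso_trans)
    next
      case False
      then have ind: "indecomp M" unfolding indecomp_def by blast
      define \<pi> where "\<pi> = proj M X"
      define p where "p = proj N Y"
      define q where "q = proj Y N"
      have h\<pi>: "shom W M \<pi>" unfolding \<pi>_def by (rule proj_shom[OF dMX])
      have hp: "shom W N p" unfolding p_def by (rule proj_shom[OF dNY])
      have hq: "shom W Y q" unfolding q_def by (rule proj_shom[OF dsum_comm[OF dNY]])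
      have hpM: "shom M N p" by (rule shom_mono[OF hp MW order.refl])
      have hqM: "shom M Y q" by (rule shom_mono[OF hq MW order.refl])
      have h\<theta>: "shom M M (\<lambda>m. \<pi> (p m))" by (rule shom_comp[OF hpM shom_mono[OF h\<pi> NW order.refl]])
      from fitting[OF sM h\<theta> ind] show ?thesis
      proof
        assume b: "bij_betw (\<lambda>m. \<pi> (p m)) M M"
        have dp: "dsum (p ` M) X W" and injp: "inj_on p M"
          using proj_compl[OF dMX shom_mono[OF hp MW NW]] b unfolding \<pi>_def by blast+
        have sub: "p ` M \<subseteq> N" using shomD(1)[OF hpM] by blast
        have "vs.dim (p ` M) = vs.dim M" by (rule shom_inj_dim[OF sM hpM injp])
        also have "\<dots> = vs.dim N" by (rule siso_dim[OF sM less.prems(3)])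
        finally have dd: "vs.dim N \<le> vs.dim (p ` M)" by simp
        obtain F where F: "finite F" "N \<subseteq> vs.span F" using fdF by metis
        have "p ` M = N"
          by (rule vs.fd_subspace_eq[OF F submod_subspace[OF sN] submod_subspace[OF shom_image_submod[OF sM hpM]] sub dd])
        then have "dsum N X W" using dp by simp
        then show ?thesis by (rule compl_iso[OF _ dNY])
      next
        assume "\<exists>n. \<forall>m\<in>M. ((\<lambda>m. \<pi> (p m)) ^^ n) m = 0"
        then obtain n where nil: "\<forall>m\<in>M. ((\<lambda>m. \<pi> (p m)) ^^ n) m = 0" by blast
        have b1: "bij_betw (\<lambda>m. m - \<pi> (p m)) M M" using nilp_bij(1)[OF sM h\<theta> nil] .
        have eqq: "\<pi> (q m) = m - \<pi> (p m)" if m: "m \<in> M" for m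
        proof -
          have mW: "m \<in> W" using m MW by blast
          have "q m = m - p m" unfolding q_def p_def by (rule proj_in(3)[OF dNY mW])
          then have "\<pi> (q m) = \<pi> m - \<pi> (p m)"
            using shom_diff[OF sW h\<pi> mW subsetD[OF NW shomD(1)[OF hp mW]]] by simp
          moreover have "\<pi> m = m" unfolding \<pi>_def by (rule proj_of_A[OF dMX m])
          ultimately show ?thesis by simp
        qed
        have "bij_betw (\<lambda>m. \<pi> (q m)) M M = bij_betw (\<lambda>m. m - \<pi> (p m)) M M"
          by (rule bij_betw_cong) (rule eqq)
        then have b2: "bij_betw (\<lambda>m. \<pi> (q m)) M M" using b1 by simp
        define Q where "Q = q ` M"
        have dQ: "dsum Q X W" and injq: "inj_on q M"
          using proj_compl[OF dMX shom_mono[OF hq MW YW]] b2 unfolding \<pi>_def Q_def by blast+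
        have sQ: "submod Q" using dsumD(1)[OF dQ] .
        have QY: "Q \<subseteq> Y" unfolding Q_def using shomD(1)[OF hqM] by blast
        define Z where "Z = X \<inter> Y"
        have sZ: "submod Z" unfolding Z_def by (rule submod_inter[OF sX sY])
        have dQZ: "dsum Q Z Y"
        proof (rule dsumI[OF sQ sZ])
          show "x = 0" if "x \<in> Q" "x \<in> Z" for x using that dsumD(3)[OF dQ] unfolding Z_def by blast
        next
          fix y assume y: "y \<in> Y"
          then have "y \<in> W" using YW by blast
          then obtain a x where ax: "y = a + x" "a \<in> Q" "x \<in> X" using dsumD(4)[OF dQ] by blast
          have "x = y - a" using ax(1) by simp
          then have "x \<in> Y" using submodD(5)[OF sY y] ax(2) QY by blast
          then show "\<exists>a\<in>Q. \<exists>b\<in>Z. y = a + b" using ax unfolding Z_def by blast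
        next
          fix a b assume "a \<in> Q" "b \<in> Z"
          then show "a + b \<in> Y" using QY submodD(2)[OF sY] unfolding Z_def by blast
        qed
        define W3 where "W3 = {a + b |a b. a \<in> N \<and> b \<in> Z}"
        have dNZ: "dsum N Z W3" unfolding W3_def
          by (rule dsumI[OF sN sZ]) (use dsumD(3)[OF dNY] in \<open>auto simp: Z_def\<close>)
        have dQW3: "dsum Q W3 W"
        proof (rule dsumI[OF sQ dsum_submod[OF dNZ]])
          fix x assume x: "x \<in> Q" "x \<in> W3"
          then obtain n z where nz: "x = n + z" "n \<in> N" "z \<in> Z" unfolding W3_def by blast
          have "n = x - z" using nz(1) by simp
          then have "n \<in> Y" using submodD(5)[OF sY] x(1) QY nz(3) unfolding Z_def by blast
          then have "n = 0" using nz(2) dsumD(3)[OF dNY] by blast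
          then have "x \<in> X" using nz unfolding Z_def by simp
          then show "x = 0" using x(1) dsumD(3)[OF dQ] by blast
        next
          fix w assume "w \<in> W"
          then obtain n y where ny: "w = n + y" "n \<in> N" "y \<in> Y" using dsumD(4)[OF dNY] by blast
          then obtain a z where az: "y = a + z" "a \<in> Q" "z \<in> Z" using dsumD(4)[OF dQZ] by blast
          have "w = a + (n + z)" using ny az by (simp add: algebra_simps)
          moreover have "n + z \<in> W3" unfolding W3_def using ny az by blast
          ultimately show "\<exists>a\<in>Q. \<exists>b\<in>W3. w = a + b" using az by blast
        next
          fix a b assume ab: "a \<in> Q" "b \<in> W3"
          then obtain n z where nz: "b = n + z" "n \<in> N" "z \<in> Z" unfolding W3_def by blast
          have "n \<in> W" "z \<in> W" using nz NW YW unfolding Z_def by auto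
          then have "b \<in> W" using nz(1) submodD(2)[OF sW] by simp
          moreover have "a \<in> W" using ab(1) QY YW by blast
          ultimately show "a + b \<in> W" using submodD(2)[OF sW] by simp
        qed
        have i1: "siso X W3" by (rule compl_iso[OF dQ dQW3])
        have "siso M Q" unfolding Q_def by (rule siso_image[OF hqM injq order.refl])
        then have iNQ: "siso N Q" using siso_trans siso_sym[OF sM less.prems(3)] by blast
        have i2: "siso W3 Y" by (rule sum_iso[OF dNZ dQZ iNQ siso_refl])
        show ?thesis by (rule siso_trans[OF i1 i2])
      qed
    qed
  qed
qed

end

context amod begin

lemma submod_range:
  assumes h: "mod_hom s aM sV aV h" "a_module sA s aM" shows "submod (range h)"
  unfolding submod_def
proof (intro conjI ballI allI)
  show "0 \<in> range h" using mh_zero[OF h(1)] by (metis rangeI)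
  fix x y assume "x \<in> range h" "y \<in> range h"
  then obtain u v where "x = h u" "y = h v" by blast
  then have "x + y = h (u + v)" using mh_add[OF h(1)] by simp
  then show "x + y \<in> range h" by simp
next
  fix a x assume "x \<in> range h"
  then obtain u where "x = h u" by blast
  then have "aV a x = h (aM a u)" using mh_act[OF h(1)] by simp
  then show "aV a x \<in> range h" by simp
qed

lemma ses_section_dsum:
  assumes s: "ses sM aM sV aV sN aN f g" and M: "a_module sA sM aM" and N: "a_module sA sN aN"
    and t: "mod_hom sN aN sV aV t" "\<And>n. g (t n) = n"
  shows "dsum (range t) (range f) UNIV"
proof (rule dsumI[OF submod_range[OF t(1) N] submod_range[OF ses_parts(1)[OF s] M]])
  fix x assume x: "x \<in> range t" "x \<in> range f"
  then obtain y m where "x = t y" "x = f m" by blast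
  then have "y = 0" using t(2)[of y] ses_gf[OF s, of m] by simp
  then show "x = 0" using \<open>x = t y\<close> mh_zero[OF t(1)] by simp
next
  fix w :: 'v
  have "g (w - t (g w)) = 0" using mh_diff[OF ses_parts(2)[OF s]] t(2) by simp
  then have "w - t (g w) \<in> range f" using ses_parts(5)[OF s] by blast
  moreover have "w = t (g w) + (w - t (g w))" by simp
  ultimately show "\<exists>a\<in>range t. \<exists>b\<in>range f. w = a + b" by blast
qed simp

end

lemma final_iso:
  fixes sA :: "'k::field \<Rightarrow> 'a::ring_1 \<Rightarrow> 'a"
    and sX :: "'k \<Rightarrow> 'x::ab_group_add \<Rightarrow> 'x" and aX :: "'a \<Rightarrow> 'x \<Rightarrow> 'x"
    and s1 :: "'k \<Rightarrow> 'x1::ab_group_add \<Rightarrow> 'x1" and a1 :: "'a \<Rightarrow> 'x1 \<Rightarrow> 'x1"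
    and s2 :: "'k \<Rightarrow> 'x2::ab_group_add \<Rightarrow> 'x2" and a2 :: "'a \<Rightarrow> 'x2 \<Rightarrow> 'x2"
    and s3 :: "'k \<Rightarrow> 'x3::ab_group_add \<Rightarrow> 'x3" and a3 :: "'a \<Rightarrow> 'x3 \<Rightarrow> 'x3"
  assumes X: "a_module sA sX aX" and M1: "a_module sA s1 a1" and M2: "a_module sA s2 a2"
    and M3: "a_module sA s3 a3" and fX: "fin_dim sX"
    and e1: "ses s2 a2 sX aX s1 a1 f g"
    and e2: "ses s1 a1 sX aX s3 a3 f' g'"
    and sp1: "ses_splits s2 a2 sX aX s1 a1 f g"
    and sp2: "ses_splits s1 a1 sX aX s3 a3 f' g'"
  shows "mod_iso s3 a3 s2 a2"
proof -
  interpret amod sA sX aX using X fX by unfold_locales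
  obtain t where t: "mod_hom s1 a1 sX aX t" "\<And>n. g (t n) = n" using sp1 unfolding ses_splits_def by blast
  obtain t' where t': "mod_hom s3 a3 sX aX t'" "\<And>n. g' (t' n) = n" using sp2 unfolding ses_splits_def by blast
  have d1: "dsum (range t) (range f) UNIV" by (rule ses_section_dsum[OF e1 M2 M1 t])
  have d2: "dsum (range t') (range f') UNIV" by (rule ses_section_dsum[OF e2 M1 M3 t'])
  have hf': "mod_hom s1 a1 sX aX f'" by (rule ses_parts(1)[OF e2])
  have hg: "mod_hom sX aX s1 a1 g" by (rule ses_parts(2)[OF e1])
  have iso1: "siso (range t) (range f')"
  proof -
    have h: "shom (range t) (range f') (\<lambda>v. f' (g v))"
      unfolding shom_def using mh_add[OF hg] mh_act[OF hg] mh_add[OF hf'] mh_act[OF hf'] by auto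
    have inj: "inj_on (\<lambda>v. f' (g v)) (range t)"
    proof (rule inj_onI)
      fix x y assume xy: "x \<in> range t" "y \<in> range t" "f' (g x) = f' (g y)"
      then have "g x = g y" using ses_parts(3)[OF e2] by (simp add: inj_eq)
      then show "x = y" using xy(1,2) t(2) by auto
    qed
    have "(\<lambda>v. f' (g v)) ` range t = range f'" using t(2) by (auto simp: image_def)
    then show ?thesis using siso_image[OF h inj order.refl] by simp
  qed
  have "siso (range f) (range t')" by (rule cancel_main[OF d1 dsum_comm[OF d2] iso1])
  then have "siso (range t') (range f)" by (rule siso_sym[OF dsumD(2)[OF d1]])
  then obtain \<psi> where \<psi>: "shom (range t') (range f) \<psi>" "bij_betw \<psi> (range t') (range f)"
    unfolding siso_def by blast
  define l where "l z = \<psi> (t' z)" for z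
  have lh: "mod_hom s3 a3 sX aX l"
    unfolding mod_hom_def Vector_Spaces.linear_iff
  proof (intro conjI allI)
    show "vector_space s3" by (rule a_module_vs[OF M3])
    show "vector_space sX" by (rule a_module_vs[OF X])
    show "l (x + y) = l x + l y" for x y unfolding l_def mh_add[OF t'(1)] by (rule shomD(2)[OF \<psi>(1)]) auto
    show "l (s3 c x) = sX c (l x)" for c x unfolding l_def mh_scale[OF t'(1)] by (rule shom_scale[OF \<psi>(1)]) auto
    show "l (a3 r x) = aX r (l x)" for r x unfolding l_def mh_act[OF t'(1)] by (rule shomD(3)[OF \<psi>(1)]) auto
  qed
  have rng: "l z \<in> range f" for z unfolding l_def using shomD(1)[OF \<psi>(1)] by auto
  define h where "h z = inv f (l z)" for z
  have hh: "mod_hom s3 a3 s2 a2 h" and fh: "\<And>z. f (h z) = l z"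
    using mh_through_inj[OF ses_parts(1)[OF e1] ses_parts(3)[OF e1] lh rng a_module_vs[OF M3] a_module_vs[OF M2]]
    unfolding h_def by blast+
  have injt': "inj t'" by (metis injI t'(2))
  have inj\<psi>: "inj_on \<psi> (range t')" using \<psi>(2) by (simp add: bij_betw_def)
  have "inj h"
  proof (rule injI)
    fix x y assume "h x = h y"
    then have "l x = l y" using fh by metis
    then have "t' x = t' y" unfolding l_def using inj_onD[OF inj\<psi>] by blast
    then show "x = y" using injt' by (simp add: inj_eq)
  qed
  moreover have "surj h"
    unfolding surj_def
  proof
    fix m
    have "f m \<in> \<psi> ` range t'" using \<psi>(2) by (simp add: bij_betw_def)
    then obtain z where z: "f m = \<psi> (t' z)" by blast
    have "f (h z) = f m" using fh z unfolding l_def by simp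
    then have "h z = m" using ses_parts(3)[OF e1] by (simp add: inj_eq)
    then show "\<exists>z. m = h z" by metis
  qed
  ultimately show ?thesis unfolding mod_iso_def using hh bij_def by blast
qed

theorem lemma6p2:
  fixes sA :: "'k::field \<Rightarrow> 'a::ring_1 \<Rightarrow> 'a"
    and sX :: "'k \<Rightarrow> 'x::ab_group_add \<Rightarrow> 'x" and aX :: "'a \<Rightarrow> 'x \<Rightarrow> 'x"
    and s1 :: "'k \<Rightarrow> 'x1::ab_group_add \<Rightarrow> 'x1" and a1 :: "'a \<Rightarrow> 'x1 \<Rightarrow> 'x1"
    and s2 :: "'k \<Rightarrow> 'x2::ab_group_add \<Rightarrow> 'x2" and a2 :: "'a \<Rightarrow> 'x2 \<Rightarrow> 'x2"
    and s3 :: "'k \<Rightarrow> 'x3::ab_group_add \<Rightarrow> 'x3" and a3 :: "'a \<Rightarrow> 'x3 \<Rightarrow> 'x3"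
    and f :: "'x2 \<Rightarrow> 'x" and g :: "'x \<Rightarrow> 'x1"
    and f' :: "'x1 \<Rightarrow> 'x" and g' :: "'x \<Rightarrow> 'x3"
  assumes "k_algebra sA"
    and "a_module sA sX aX" "a_module sA s1 a1" "a_module sA s2 a2" "a_module sA s3 a3"
    and "fin_dim sX" "fin_dim s1" "fin_dim s2" "fin_dim s3"
    and "ses s2 a2 sX aX s1 a1 f g"
    and "ses s1 a1 sX aX s3 a3 f' g'"
    and "ext1_self_zero sA s1 a1"
    and "dim_hom s1 a1 s2 a2 = dim_hom s1 a1 s3 a3"
    and "dim_hom s2 a2 s1 a1 = dim_hom s3 a3 s1 a1"
  shows "ses_splits s2 a2 sX aX s1 a1 f g \<and> ses_splits s1 a1 sX aX s3 a3 f' g'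
         \<and> mod_iso s3 a3 s2 a2"
proof -
  have sp1: "ses_splits s2 a2 sX aX s1 a1 f g"
    by (rule split1[OF assms(2-13)])
  have sp2: "ses_splits s1 a1 sX aX s3 a3 f' g'"
    by (rule split2[OF assms(2-11) sp1 assms(14)])
  have "mod_iso s3 a3 s2 a2"
    by (rule final_iso[OF assms(2-6) assms(10,11) sp1 sp2])
  then show ?thesis using sp1 sp2 by blast
qed

end
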